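(* Let $k\ge1$ be an integer and let $F_1,\ldots,F_N$ be distribution functions on $\mathbb{R}$ with $\int x^{2k}dF_j(x)<\infty$ for $j=1,\ldots,N$. For ${\bf s}=\{i_1,\ldots,i_m\}\subset\{1,\ldots,N\}$ let $F_{\bf s}=F_{i_1}\ast\cdots\ast F_{i_m}$ and let $F=F_1\ast\cdots\ast F_N$. Let $\hat t^{(k)}_{{\bf s},n}$ be the polynomial Pitman estimator of degree $k$ of $\theta$ from a sample of size $n$ from $F_{\bf s}(x-\theta)$, and $\hat t^{(k)}_n$ the polynomial Pitman estimator of degree $k$ from a sample of size $n$ from $F(x-\theta)$. Then for any $n\ge1$ and $1\le m\le N$, $$\mathrm{var}(\hat t^{(k)}_n)\ \ge\ \frac{1}{\binom{N-1}{m-1}}\sum_{\bf s}\mathrm{var}(\hat t^{(k)}_{{\bf s},n}),$$ the sum being over all subsets ${\bf s}$ of $\{1,\ldots,N\}$ with exactly $m$ elements.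
   Context: A sample of size $n$ from $G(x-\theta)$ ($\theta\in\mathbb{R}$ unknown) is $x_1,\ldots,x_n$ i.i.d. with $x_i-\theta\sim G$; assume $\int x^{2k}dG<\infty$. Let $M_k$ be the (finite-dimensional) space of polynomials of degree at most $k$ in the residuals $x_1-\bar x,\ldots,x_n-\bar x$, and let $\hat E(\cdot\mid M_k)$ denote orthogonal projection onto $M_k$ in the Hilbert space of polynomials of degree at most $k$ in $x_1,\ldots,x_n$ with inner product $(q_1,q_2)=E_0(q_1q_2)$, $E_0$ being expectation under $\theta=0$. The polynomial Pitman estimator of degree $k$ is $\hat t^{(k)}_n=\bar x-\hat E(\bar x\mid M_k)$; it is the minimum variance equivariant polynomial estimator of degree $k$ (equivariant: $t(x_1+c,\ldots,x_n+c)=t(x_1,\ldots,x_n)+c$). Convolution: $(F_1\ast F_2)(x)=\int F_1(x-y)\,dF_2(y)$. *)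

theory Defs
  imports "HOL-Probability.Probability"
begin

definition conv_set :: "(nat \<Rightarrow> real measure) \<Rightarrow> nat set \<Rightarrow> real measure" where
  "conv_set F s = fold (\<lambda>i M. F i \<star> M) (sorted_list_of_set s) (return borel 0)"

definition exps :: "nat \<Rightarrow> nat \<Rightarrow> (nat \<Rightarrow> nat) set" where
  "exps n k = {\<alpha>. (\<forall>i\<ge>n. \<alpha> i = 0) \<and> sum \<alpha> {..<n} \<le> k}"

definition poly_funs :: "nat \<Rightarrow> nat \<Rightarrow> ((nat \<Rightarrow> real) \<Rightarrow> real) set" where
  "poly_funs n k = {f. \<exists>c :: (nat \<Rightarrow> nat) \<Rightarrow> real.
      f = (\<lambda>x. \<Sum>\<alpha>\<in>exps n k. c \<alpha> * (\<Prod>i<n. x i ^ \<alpha> i))}"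

definition sample_mean :: "nat \<Rightarrow> (nat \<Rightarrow> real) \<Rightarrow> real" where
  "sample_mean n x = (\<Sum>i<n. x i) / real n"

definition resid_polys :: "nat \<Rightarrow> nat \<Rightarrow> ((nat \<Rightarrow> real) \<Rightarrow> real) set" where
  "resid_polys n k = {(\<lambda>x. p (\<lambda>i. x i - sample_mean n x)) | p. p \<in> poly_funs n k}"

text \<open>Law of a sample of size n under theta = 0 from G.\<close>
definition sample_law :: "nat \<Rightarrow> real measure \<Rightarrow> (nat \<Rightarrow> real) measure" where
  "sample_law n G = PiM {..<n} (\<lambda>_. G)"

text \<open>Orthogonal projection of xbar onto M_k w.r.t. (q1,q2) = E_0(q1 q2).\<close>
definition proj_mean :: "nat \<Rightarrow> nat \<Rightarrow> real measure \<Rightarrow> ((nat \<Rightarrow> real) \<Rightarrow> real)" where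
  "proj_mean k n G = (SOME q. q \<in> resid_polys n k \<and>
      (\<forall>p \<in> resid_polys n k.
         integral\<^sup>L (sample_law n G) (\<lambda>x. (sample_mean n x - q x) * p x) = 0))"

definition pitman_est :: "nat \<Rightarrow> nat \<Rightarrow> real measure \<Rightarrow> (nat \<Rightarrow> real) \<Rightarrow> real" where
  "pitman_est k n G = (\<lambda>x. sample_mean n x - proj_mean k n G x)"

text \<open>Its variance (computed under theta = 0; equivariance makes it independent of theta).\<close>
definition pitman_var :: "nat \<Rightarrow> nat \<Rightarrow> real measure \<Rightarrow> real" where
  "pitman_var k n G = prob_space.variance (sample_law n G) (pitman_est k n G)"

end

theory Submission
  imports Defs
begin

locale sip =
  fixes V :: "('a \<Rightarrow> real) set" and ip :: "('a \<Rightarrow> real) \<Rightarrow> ('a \<Rightarrow> real) \<Rightarrow> real"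
  assumes V_diff: "f \<in> V \<Longrightarrow> g \<in> V \<Longrightarrow> (\<lambda>x. f x - g x) \<in> V"
  and V_add: "f \<in> V \<Longrightarrow> g \<in> V \<Longrightarrow> (\<lambda>x. f x + g x) \<in> V"
  and V_scale: "f \<in> V \<Longrightarrow> (\<lambda>x. c * f x) \<in> V"
  and V_zero: "(\<lambda>x. 0) \<in> V"
  and ip_sym: "f \<in> V \<Longrightarrow> g \<in> V \<Longrightarrow> ip f g = ip g f"
  and ip_add: "f \<in> V \<Longrightarrow> g \<in> V \<Longrightarrow> h \<in> V \<Longrightarrow> ip (\<lambda>x. f x + g x) h = ip f h + ip g h"
  and ip_diff: "f \<in> V \<Longrightarrow> g \<in> V \<Longrightarrow> h \<in> V \<Longrightarrow> ip (\<lambda>x. f x - g x) h = ip f h - ip g h"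
  and ip_scale: "f \<in> V \<Longrightarrow> h \<in> V \<Longrightarrow> ip (\<lambda>x. c * f x) h = c * ip f h"
  and ip_pos: "f \<in> V \<Longrightarrow> ip f f \<ge> 0"
begin

lemma ip_zero: "h \<in> V \<Longrightarrow> ip (\<lambda>x. 0) h = 0"
  using ip_scale[of "\<lambda>x. 0" h 0] V_zero by simp

lemma ip_add2: "f \<in> V \<Longrightarrow> g \<in> V \<Longrightarrow> h \<in> V \<Longrightarrow> ip h (\<lambda>x. f x + g x) = ip h f + ip h g"
  using ip_sym[of h "\<lambda>x. f x + g x"] ip_sym[of h f] ip_sym[of h g] V_add[of f g] ip_add[of f g h] by simp

lemma ip_diff2: "f \<in> V \<Longrightarrow> g \<in> V \<Longrightarrow> h \<in> V \<Longrightarrow> ip h (\<lambda>x. f x - g x) = ip h f - ip h g"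
  using ip_sym[of h "\<lambda>x. f x - g x"] ip_sym[of h f] ip_sym[of h g] V_diff[of f g] ip_diff[of f g h] by simp

lemma ip_scale2: "f \<in> V \<Longrightarrow> h \<in> V \<Longrightarrow> ip h (\<lambda>x. c * f x) = c * ip h f"
  using ip_sym[of h "\<lambda>x. c * f x"] ip_sym[of h f] V_scale[of f c] ip_scale[of f h c] by simp

lemma V_sum: "finite I \<Longrightarrow> (\<And>i. i \<in> I \<Longrightarrow> \<phi> i \<in> V) \<Longrightarrow> (\<lambda>x. \<Sum>i\<in>I. c i * \<phi> i x) \<in> V"
proof (induction I rule: finite_induct)
  case empty then show ?case using V_zero by simp
next
  case (insert a I)
  then have "(\<lambda>x. c a * \<phi> a x + (\<Sum>i\<in>I. c i * \<phi> i x)) \<in> V"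
    by (intro V_add V_scale) auto
  then show ?case using insert by simp
qed

lemma ip_sum: "finite I \<Longrightarrow> (\<And>i. i \<in> I \<Longrightarrow> \<phi> i \<in> V) \<Longrightarrow> h \<in> V \<Longrightarrow>
   ip (\<lambda>x. \<Sum>i\<in>I. c i * \<phi> i x) h = (\<Sum>i\<in>I. c i * ip (\<phi> i) h)"
proof (induction I rule: finite_induct)
  case empty then show ?case using ip_zero by simp
next
  case (insert a I)
  have "ip (\<lambda>x. c a * \<phi> a x + (\<Sum>i\<in>I. c i * \<phi> i x)) h = ip (\<lambda>x. c a * \<phi> a x) h + ip (\<lambda>x. \<Sum>i\<in>I. c i * \<phi> i x) h"
    using insert by (intro ip_add V_scale V_sum) auto
  then show ?case using insert by (simp add: ip_scale)
qed

lemma ip_sum2: "finite I \<Longrightarrow> (\<And>i. i \<in> I \<Longrightarrow> \<phi> i \<in> V) \<Longrightarrow> h \<in> V \<Longrightarrow>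
   ip h (\<lambda>x. \<Sum>i\<in>I. c i * \<phi> i x) = (\<Sum>i\<in>I. c i * ip h (\<phi> i))"
  using ip_sym[of h "\<lambda>x. \<Sum>i\<in>I. c i * \<phi> i x"] V_sum[of I \<phi> c] ip_sum[of I \<phi> h c] ip_sym[of h]
  by (simp cong: sum.cong)

lemma ip_quad_zero:
  assumes "f \<in> V" "g \<in> V" "ip g g = 0" shows "ip f g = 0"
proof -
  have "0 \<le> ip (\<lambda>x. f x + t * g x) (\<lambda>x. f x + t * g x)" for t
    using assms by (intro ip_pos V_add V_scale)
  also have "ip (\<lambda>x. f x + t * g x) (\<lambda>x. f x + t * g x) = ip f f + 2 * t * ip f g" for t
  proof -
    have gV: "(\<lambda>x. t * g x) \<in> V" using assms by (intro V_scale)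
    have "ip (\<lambda>x. f x + t * g x) (\<lambda>x. f x + t * g x) = ip f (\<lambda>x. f x + t * g x) + ip (\<lambda>x. t * g x) (\<lambda>x. f x + t * g x)"
      using assms gV by (intro ip_add V_add)
    also have "\<dots> = ip f f + ip f (\<lambda>x. t * g x) + (ip (\<lambda>x. t * g x) f + ip (\<lambda>x. t * g x) (\<lambda>x. t * g x))"
      using assms gV by (simp add: ip_add2)
    also have "\<dots> = ip f f + 2 * t * ip f g + t * t * ip g g"
      using assms gV by (simp add: ip_scale ip_scale2 ip_sym[of g f])
    finally show ?thesis using assms by simp
  qed
  finally have *: "0 \<le> ip f f + 2 * t * ip f g" for t .
  show ?thesis
  proof (rule ccontr)
    assume ne: "ip f g \<noteq> 0"
    have "0 \<le> ip f f + 2 * (- (ip f f + 1) / (2 * ip f g)) * ip f g" by (rule *)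
    also have "\<dots> = -1" using ne by (simp add: field_simps)
    finally show False by simp
  qed
qed

lemma gram_schmidt:
  assumes "finite I" "\<And>i. i \<in> I \<Longrightarrow> \<phi> i \<in> V"
  shows "g \<in> V \<Longrightarrow> \<exists>c. \<forall>j\<in>I. ip (\<lambda>x. g x - (\<Sum>i\<in>I. c i * \<phi> i x)) (\<phi> j) = 0"
  using assms
proof (induction I arbitrary: g rule: finite_induct)
  case empty then show ?case by simp
next
  case (insert d I)
  have phiV: "\<And>i. i \<in> I \<Longrightarrow> \<phi> i \<in> V" using insert by auto
  have dV: "\<phi> d \<in> V" using insert by auto
  obtain c where c: "\<forall>j\<in>I. ip (\<lambda>x. g x - (\<Sum>i\<in>I. c i * \<phi> i x)) (\<phi> j) = 0"
    using insert.IH[OF insert.prems(1) phiV] by blast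
  obtain a where a: "\<forall>j\<in>I. ip (\<lambda>x. \<phi> d x - (\<Sum>i\<in>I. a i * \<phi> i x)) (\<phi> j) = 0"
    using insert.IH[OF dV phiV] by blast
  define r where "r = (\<lambda>x. g x - (\<Sum>i\<in>I. c i * \<phi> i x))"
  define rd where "rd = (\<lambda>x. \<phi> d x - (\<Sum>i\<in>I. a i * \<phi> i x))"
  have rV: "r \<in> V" unfolding r_def using insert phiV by (intro V_diff V_sum) auto
  have rdV: "rd \<in> V" unfolding rd_def using dV phiV insert by (intro V_diff V_sum) auto
  have sV: "(\<lambda>x. \<Sum>i\<in>I. a i * \<phi> i x) \<in> V" using phiV insert by (intro V_sum) auto
  have r_orth: "ip r (\<phi> j) = 0" if "j \<in> I" for j using c that r_def by simp
  have rd_orth: "ip rd (\<phi> j) = 0" if "j \<in> I" for j using a that rd_def by simp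
  have r_sum: "ip r (\<lambda>x. \<Sum>i\<in>I. a i * \<phi> i x) = 0"
    using r_orth rV phiV insert by (simp add: ip_sum2)
  have rd_sum: "ip rd (\<lambda>x. \<Sum>i\<in>I. a i * \<phi> i x) = 0"
    using rd_orth rdV phiV insert by (simp add: ip_sum2)
  have phid: "\<phi> d = (\<lambda>x. rd x + (\<Sum>i\<in>I. a i * \<phi> i x))" unfolding rd_def by simp
  show ?case
  proof (cases "ip rd rd = 0")
    case True
    define c' where "c' = c(d := 0)"
    have eq: "(\<lambda>x. g x - (\<Sum>i\<in>insert d I. c' i * \<phi> i x)) = r"
      using insert unfolding r_def c'_def by (auto simp: fun_eq_iff intro!: sum.cong)
    have "ip r (\<phi> d) = 0"
    proof -
      have "ip r (\<phi> d) = ip r rd + ip r (\<lambda>x. \<Sum>i\<in>I. a i * \<phi> i x)"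
        by (subst phid) (simp add: ip_add2 rV rdV sV)
      also have "ip r rd = 0" using ip_quad_zero[OF rV rdV True] .
      finally show ?thesis using r_sum by simp
    qed
    then show ?thesis using eq r_orth by (intro exI[of _ c']) auto
  next
    case False
    define t where "t = ip r rd / ip rd rd"
    define c' where "c' = (\<lambda>i. if i = d then t else c i - t * a i)"
    have eq: "(\<lambda>x. g x - (\<Sum>i\<in>insert d I. c' i * \<phi> i x)) = (\<lambda>x. r x - t * rd x)"
    proof
      fix x
      have "(\<Sum>i\<in>insert d I. c' i * \<phi> i x) = t * \<phi> d x + (\<Sum>i\<in>I. (c i - t * a i) * \<phi> i x)"
        using insert unfolding c'_def by (auto intro!: sum.cong)
      also have "\<dots> = t * \<phi> d x + (\<Sum>i\<in>I. c i * \<phi> i x) - t * (\<Sum>i\<in>I. a i * \<phi> i x)"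
        by (simp add: algebra_simps sum_subtractf sum_distrib_left)
      finally show "g x - (\<Sum>i\<in>insert d I. c' i * \<phi> i x) = r x - t * rd x"
        unfolding r_def rd_def by (simp add: algebra_simps)
    qed
    have rtV: "(\<lambda>x. t * rd x) \<in> V" using rdV by (rule V_scale)
    have o1: "ip (\<lambda>x. r x - t * rd x) (\<phi> j) = 0" if "j \<in> I" for j
      using that r_orth rd_orth insert rV rdV rtV by (simp add: ip_diff ip_scale)
    have "ip (\<lambda>x. r x - t * rd x) rd = ip r rd - t * ip rd rd"
      using rV rdV rtV by (simp add: ip_diff ip_scale)
    also have "\<dots> = 0" using False unfolding t_def by simp
    finally have o2: "ip (\<lambda>x. r x - t * rd x) rd = 0" .
    have "ip (\<lambda>x. r x - t * rd x) (\<lambda>x. \<Sum>i\<in>I. a i * \<phi> i x) = 0"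
      using o1 phiV insert rV rdV rtV V_diff[OF rV rtV]
      by (simp add: ip_sum2)
    then have "ip (\<lambda>x. r x - t * rd x) (\<phi> d) = 0"
      using o2 by (subst phid) (simp add: ip_add2 V_diff[OF rV rtV] rdV sV)
    then show ?thesis using o1 eq by (intro exI[of _ c']) auto
  qed
qed

lemma pythagoras:
  assumes "g \<in> V" "q \<in> V" "p \<in> V" "ip (\<lambda>x. g x - q x) (\<lambda>x. q x - p x) = 0"
  shows "ip (\<lambda>x. g x - q x) (\<lambda>x. g x - q x) \<le> ip (\<lambda>x. g x - p x) (\<lambda>x. g x - p x)"
proof -
  let ?a = "\<lambda>x. g x - q x" and ?b = "\<lambda>x. q x - p x"
  have aV: "?a \<in> V" and bV: "?b \<in> V" using assms by (auto intro: V_diff)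
  have eq: "(\<lambda>x. g x - p x) = (\<lambda>x. ?a x + ?b x)" by auto
  have "ip (\<lambda>x. g x - p x) (\<lambda>x. g x - p x) = ip ?a ?a + 2 * ip ?a ?b + ip ?b ?b"
  proof -
    have "ip (\<lambda>x. ?a x + ?b x) (\<lambda>x. ?a x + ?b x) = ip ?a (\<lambda>x. ?a x + ?b x) + ip ?b (\<lambda>x. ?a x + ?b x)"
      using aV bV by (intro ip_add V_add)
    also have "\<dots> = ip ?a ?a + ip ?a ?b + (ip ?b ?a + ip ?b ?b)"
      by (simp only: ip_add2[OF aV bV aV] ip_add2[OF aV bV bV])
    finally have "ip (\<lambda>x. ?a x + ?b x) (\<lambda>x. ?a x + ?b x) = ip ?a ?a + 2 * ip ?a ?b + ip ?b ?b"
      using ip_sym[OF bV aV] by simp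
    then show ?thesis by (simp only: eq)
  qed
  then show ?thesis using assms(4) ip_pos[OF bV] by simp
qed

end


definition beta :: "nat \<Rightarrow> nat \<Rightarrow> real" where
  "beta N m = real (N choose m) - real ((N - 1) choose m)"

lemma beta_eq: "N \<ge> 1 \<Longrightarrow> m \<ge> 1 \<Longrightarrow> beta N m = real ((N - 1) choose (m - 1))"
  unfolding beta_def using choose_reduce_nat[of N m] by simp

lemma numeric_step:
  fixes a b c e :: real
  assumes m: "m \<ge> 1" and key: "a - b - c + e \<ge> 0" and N0: "N = 0 \<Longrightarrow> c = a"
  shows "beta N m * (b - e) + real (N choose m) * e + beta N (m - 1) * (a - c) + real (N choose (m - 1)) * c
         \<le> beta (Suc N) m * (a - e) + real (Suc N choose m) * e"
proof (cases "N = 0")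
  case True
  then have "c = a" using N0 by simp
  show ?thesis
  proof (cases "m = 1")
    case True then show ?thesis using \<open>c = a\<close> \<open>N = 0\<close> by (simp add: beta_def)
  next
    case False
    then have "m \<ge> 2" using m by simp
    then have z: "0 choose m = 0" "0 choose (m - Suc 0) = 0" "Suc 0 choose m = 0" by simp_all
    show ?thesis unfolding beta_def \<open>N = 0\<close> by (simp add: z)
  qed
next
  case False
  then have N1: "N \<ge> 1" by simp
  have p: "beta N m = real ((N - 1) choose (m - 1))" using beta_eq[OF N1 m] .
  have q: "beta (Suc N) m = real (N choose (m - 1))" using beta_eq[of "Suc N" m] m by simp
  have r: "beta N (m - 1) = real (N choose (m - 1)) - real ((N - 1) choose (m - 1))"
    unfolding beta_def ..
  have s: "real (Suc N choose m) = real (N choose m) + real (N choose (m - 1))"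
    using m by (cases m) auto
  have "beta (Suc N) m * (a - e) + real (Suc N choose m) * e -
      (beta N m * (b - e) + real (N choose m) * e + beta N (m - 1) * (a - c) + real (N choose (m - 1)) * c)
      = real ((N - 1) choose (m - 1)) * (a - b - c + e)"
    unfolding p q r s by (simp add: algebra_simps)
  also have "\<dots> \<ge> 0" using key by simp
  finally show ?thesis by simp
qed

locale anova = sip V ip for V :: "('a \<Rightarrow> real) set" and ip +
  fixes P :: "nat set \<Rightarrow> ('a \<Rightarrow> real) \<Rightarrow> ('a \<Rightarrow> real)" and J0 :: "nat set"
  assumes P_V: "B \<subseteq> J0 \<Longrightarrow> f \<in> V \<Longrightarrow> P B f \<in> V"
  and P_empty: "f \<in> V \<Longrightarrow> ip (P {} f) f = ip f f"
  and P_idem: "B \<subseteq> J0 \<Longrightarrow> f \<in> V \<Longrightarrow> P B (P B f) = P B f"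
  and P_sa: "B \<subseteq> J0 \<Longrightarrow> f \<in> V \<Longrightarrow> g \<in> V \<Longrightarrow> ip (P B f) g = ip f (P B g)"
  and P_union: "B \<subseteq> J0 \<Longrightarrow> B' \<subseteq> J0 \<Longrightarrow> B \<inter> B' = {} \<Longrightarrow> f \<in> V \<Longrightarrow> P (B \<union> B') f = P B (P B' f)"
  and P_diff: "B \<subseteq> J0 \<Longrightarrow> f \<in> V \<Longrightarrow> g \<in> V \<Longrightarrow> P B (\<lambda>x. f x - g x) = (\<lambda>x. P B f x - P B g x)"
begin

definition S :: "nat set \<Rightarrow> ('a \<Rightarrow> real) \<Rightarrow> nat \<Rightarrow> real" where
  "S J f m = (\<Sum>s \<in> {s. s \<subseteq> J \<and> card s = m}. ip (P (J - s) f) f)"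

lemma P_comm: "B \<subseteq> J0 \<Longrightarrow> B' \<subseteq> J0 \<Longrightarrow> B \<inter> B' = {} \<Longrightarrow> f \<in> V \<Longrightarrow> P B (P B' f) = P B' (P B f)"
  using P_union[of B B' f] P_union[of B' B f] by (simp add: Un_commute Int_commute)

lemma P_contract: "B \<subseteq> J0 \<Longrightarrow> f \<in> V \<Longrightarrow> ip (P B f) f \<le> ip f f"
proof -
  assume B: "B \<subseteq> J0" and f: "f \<in> V"
  have Pf: "P B f \<in> V" using P_V[OF B f] .
  have d: "(\<lambda>x. f x - P B f x) \<in> V" using f Pf by (rule V_diff)
  have "0 \<le> ip (\<lambda>x. f x - P B f x) (\<lambda>x. f x - P B f x)" using d by (rule ip_pos)
  also have "\<dots> = ip f f - ip f (P B f) - (ip (P B f) f - ip (P B f) (P B f))"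
    using f Pf d by (simp add: ip_diff ip_diff2)
  also have "ip (P B f) (P B f) = ip (P B f) f"
    using P_sa[OF B Pf f] P_idem[OF B f] by simp
  also have "ip f (P B f) = ip (P B f) f" using ip_sym[OF f Pf] .
  finally show ?thesis by simp
qed

lemma S_ineq:
  assumes "finite J" "J \<subseteq> J0"
  shows "f \<in> V \<Longrightarrow> S J f m \<le> beta (card J) m * (ip f f - ip (P J f) f) + real (card J choose m) * ip (P J f) f"
  using assms
proof (induction J arbitrary: f m rule: finite_induct)
  case empty
  show ?case
  proof (cases "m = 0")
    case True
    have eq: "{s. s \<subseteq> {} \<and> card s = m} = {{}}" using True by auto
    show ?thesis unfolding S_def eq using True by (simp add: beta_def)
  next
    case False
    have eq: "{s. s \<subseteq> {} \<and> card s = m} = {}" using False by auto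
    show ?thesis unfolding S_def eq using False by (simp add: beta_def binomial_eq_0)
  qed
next
  case (insert j J)
  let ?J' = "insert j J"
  have JJ0: "J \<subseteq> J0" and jJ0: "{j} \<subseteq> J0" using insert by auto
  have f: "f \<in> V" by fact
  show ?case
  proof (cases "m = 0")
    case True
    have "{s. s \<subseteq> ?J' \<and> card s = m} = {{}}" using True insert by (auto simp: card_eq_0_iff dest: finite_subset)
    then show ?thesis using True by (simp add: S_def beta_def)
  next
    case False
    then have m1: "m \<ge> 1" by simp
    define Q where "Q = P {j}"
    have QV: "g \<in> V \<Longrightarrow> Q g \<in> V" for g unfolding Q_def using jJ0 by (rule P_V)
    have Qf: "Q f \<in> V" using QV[OF f] .
    have PV: "s \<subseteq> J \<Longrightarrow> g \<in> V \<Longrightarrow> P (J - s) g \<in> V" for s g using JJ0 by (intro P_V) auto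
    have Qcomm: "s \<subseteq> J \<Longrightarrow> g \<in> V \<Longrightarrow> Q (P (J - s) g) = P (J - s) (Q g)" for s g
      unfolding Q_def using insert JJ0 jJ0 by (intro P_comm) auto
    have Qunion: "s \<subseteq> J \<Longrightarrow> g \<in> V \<Longrightarrow> P (?J' - s) g = Q (P (J - s) g)" for s g
    proof -
      assume s: "s \<subseteq> J" and g: "g \<in> V"
      have "?J' - s = {j} \<union> (J - s)" using s insert by auto
      moreover have "P ({j} \<union> (J - s)) g = P {j} (P (J - s) g)"
        using insert s g JJ0 jJ0 by (intro P_union) auto
      ultimately show ?thesis unfolding Q_def by simp
    qed
    have Qsa: "g \<in> V \<Longrightarrow> h \<in> V \<Longrightarrow> ip (Q g) h = ip g (Q h)" for g h unfolding Q_def using jJ0 by (rule P_sa)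
    have Qidem: "g \<in> V \<Longrightarrow> Q (Q g) = Q g" for g unfolding Q_def using jJ0 by (rule P_idem)
    have part1: "ip (P (?J' - s) f) f = ip (P (J - s) (Q f)) (Q f)" if s: "s \<subseteq> J" for s
    proof -
      have PJs: "P (J - s) f \<in> V" using PV[OF s f] .
      have "ip (P (?J' - s) f) f = ip (Q (P (J - s) f)) f" using Qunion[OF s f] by simp
      also have "\<dots> = ip (P (J - s) f) (Q f)" using Qsa[OF PJs f] .
      also have "\<dots> = ip (Q f) (P (J - s) f)" using ip_sym[OF PJs Qf] .
      also have "\<dots> = ip (Q (Q f)) (P (J - s) f)" using Qidem[OF f] by simp
      also have "\<dots> = ip (Q f) (Q (P (J - s) f))" using Qsa[OF Qf PJs] .
      also have "\<dots> = ip (Q f) (P (J - s) (Q f))" using Qcomm[OF s f] by simp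
      also have "\<dots> = ip (P (J - s) (Q f)) (Q f)" using ip_sym[OF Qf PV[OF s Qf]] .
      finally show ?thesis .
    qed
    have part2: "ip (P (?J' - insert j t) f) f = ip (P (J - t) f) f" if "t \<subseteq> J" for t
    proof -
      have "?J' - insert j t = J - t" using insert that by auto
      then show ?thesis by simp
    qed
    have split: "{s. s \<subseteq> ?J' \<and> card s = m} = {s. s \<subseteq> J \<and> card s = m} \<union> insert j ` {t. t \<subseteq> J \<and> card t = m - 1}"
    proof (intro equalityI subsetI)
      fix s assume "s \<in> {s. s \<subseteq> ?J' \<and> card s = m}"
      then have s: "s \<subseteq> ?J'" "card s = m" by auto
      show "s \<in> {s. s \<subseteq> J \<and> card s = m} \<union> insert j ` {t. t \<subseteq> J \<and> card t = m - 1}"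
      proof (cases "j \<in> s")
        case True
        have "s = insert j (s - {j})" using True by auto
        moreover have "s - {j} \<subseteq> J" using s by auto
        moreover have "card (s - {j}) = m - 1" using s True insert by (simp add: card_Diff_singleton)
        ultimately show ?thesis by blast
      next
        case False then show ?thesis using s by auto
      qed
    next
      fix s assume "s \<in> {s. s \<subseteq> J \<and> card s = m} \<union> insert j ` {t. t \<subseteq> J \<and> card t = m - 1}"
      then show "s \<in> {s. s \<subseteq> ?J' \<and> card s = m}"
      proof
        assume "s \<in> {s. s \<subseteq> J \<and> card s = m}" then show ?thesis by auto
      next
        assume "s \<in> insert j ` {t. t \<subseteq> J \<and> card t = m - 1}"
        then obtain t where t: "s = insert j t" "t \<subseteq> J" "card t = m - 1" by auto
        have "j \<notin> t" using t insert by auto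
        moreover have "finite t" using t insert by (auto dest: finite_subset)
        ultimately have "card s = m" using t m1 by simp
        then show ?thesis using t by auto
      qed
    qed
    have fin1: "finite {s. s \<subseteq> J \<and> card s = m}" using insert by simp
    have fin2: "finite (insert j ` {t. t \<subseteq> J \<and> card t = m - 1})" using insert by simp
    have disj: "{s. s \<subseteq> J \<and> card s = m} \<inter> insert j ` {t. t \<subseteq> J \<and> card t = m - 1} = {}"
      using insert by auto
    have inj: "inj_on (insert j) {t. t \<subseteq> J \<and> card t = m - 1}"
      using insert by (auto simp: inj_on_def) (metis insert_absorb insert_ident subsetD)+
    have "S ?J' f m = (\<Sum>s\<in>{s. s \<subseteq> J \<and> card s = m}. ip (P (?J' - s) f) f)
        + (\<Sum>s\<in>insert j ` {t. t \<subseteq> J \<and> card t = m - 1}. ip (P (?J' - s) f) f)"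
      unfolding S_def split using fin1 fin2 disj by (rule sum.union_disjoint)
    also have "(\<Sum>s\<in>{s. s \<subseteq> J \<and> card s = m}. ip (P (?J' - s) f) f) = S J (Q f) m"
      unfolding S_def using part1 by (intro sum.cong) auto
    also have "(\<Sum>s\<in>insert j ` {t. t \<subseteq> J \<and> card t = m - 1}. ip (P (?J' - s) f) f) = S J f (m - 1)"
      unfolding S_def using part2 by (subst sum.reindex[OF inj]) (auto intro!: sum.cong)
    finally have Seq: "S ?J' f m = S J (Q f) m + S J f (m - 1)" .
    define a where "a = ip f f"
    define b where "b = ip (Q f) (Q f)"
    define c where "c = ip (P J f) f"
    define e where "e = ip (P ?J' f) f"
    have PJ: "P J f \<in> V" using PV[of "{}" f] f by simp
    have PJQ: "P J (Q f) \<in> V" using PV[of "{}" "Q f"] Qf by simp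
    have QPJ: "Q (P J f) = P J (Q f)" using Qcomm[of "{}" f] f by simp
    have PJ': "P ?J' f = Q (P J f)" using Qunion[of "{}" f] f insert by simp
    have e2: "ip (P J (Q f)) (Q f) = e"
    proof -
      have "ip (P J (Q f)) (Q f) = ip (Q (P J (Q f))) f" using Qsa[OF PJQ f] by simp
      also have "Q (P J (Q f)) = P J (Q (Q f))" using Qcomm[of "{}" "Q f"] Qf by simp
      also have "\<dots> = P J (Q f)" using Qidem[OF f] by simp
      finally show ?thesis unfolding e_def PJ' QPJ .
    qed
    have IH1: "S J (Q f) m \<le> beta (card J) m * (b - e) + real (card J choose m) * e"
      using insert.IH[OF Qf JJ0] unfolding b_def e2 by simp
    have IH2: "S J f (m - 1) \<le> beta (card J) (m - 1) * (a - c) + real (card J choose (m - 1)) * c"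
      using insert.IH[OF f JJ0] unfolding a_def c_def by simp
    have key: "a - b - c + e \<ge> 0"
    proof -
      define u where "u = (\<lambda>x. f x - P J f x)"
      have u: "u \<in> V" unfolding u_def using f PJ by (rule V_diff)
      have Qu: "Q u \<in> V" using QV[OF u] .
      have "ip (Q u) u \<le> ip u u" using P_contract[OF jJ0 u] unfolding Q_def .
      moreover have "ip u u = a - c"
      proof -
        have "ip u u = ip f f - ip f (P J f) - (ip (P J f) f - ip (P J f) (P J f))"
          unfolding u_def using f PJ V_diff[OF f PJ] by (simp add: ip_diff ip_diff2)
        also have "ip (P J f) (P J f) = ip (P J f) f"
          using P_sa[OF JJ0 PJ f] P_idem[OF JJ0 f] by simp
        also have "ip f (P J f) = ip (P J f) f" using ip_sym[OF f PJ] .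
        finally show ?thesis unfolding a_def c_def by simp
      qed
      moreover have "ip (Q u) u = b - e"
      proof -
        have Qu_eq: "Q u = (\<lambda>x. Q f x - Q (P J f) x)" unfolding u_def Q_def using jJ0 f PJ by (rule P_diff)
        have QPJV: "Q (P J f) \<in> V" using QV[OF PJ] .
        have "ip (Q u) u = ip (\<lambda>x. Q f x - Q (P J f) x) u" by (simp only: Qu_eq)
        also have "\<dots> = ip (Q f) f - ip (Q f) (P J f) - (ip (Q (P J f)) f - ip (Q (P J f)) (P J f))"
          unfolding u_def using f PJ Qf QPJV V_diff[OF f PJ] by (simp add: ip_diff ip_diff2)
        also have "ip (Q f) f = b" unfolding b_def using Qsa[OF f Qf] Qidem[OF f] ip_sym[OF f Qf] by simp
        also have "ip (Q (P J f)) f = e" unfolding e_def PJ' ..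
        also have "ip (Q f) (P J f) = e"
        proof -
          have "ip (Q f) (P J f) = ip (P J (Q f)) f" using P_sa[OF JJ0 Qf f] ip_sym[OF Qf PJ] P_sa[OF JJ0 f Qf]
            by (metis PJ PJQ f ip_sym)
          then show ?thesis using QPJ unfolding e_def PJ' by simp
        qed
        also have "ip (Q (P J f)) (P J f) = e"
        proof -
          have "ip (Q (P J f)) (P J f) = ip (P J (Q (P J f))) f" using P_sa[OF JJ0 QPJV f] by simp
          also have "P J (Q (P J f)) = Q (P J (P J f))" using Qcomm[of "{}" "P J f"] PJ by simp
          also have "\<dots> = Q (P J f)" using P_idem[OF JJ0 f] by simp
          finally show ?thesis unfolding e_def PJ' .
        qed
        finally show ?thesis by simp
      qed
      ultimately show ?thesis by simp
    qed
    have N0: "card J = 0 \<Longrightarrow> c = a"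
    proof -
      assume "card J = 0" then have "J = {}" using insert by simp
      then show ?thesis unfolding c_def a_def using P_empty[OF f] by simp
    qed
    have "S ?J' f m \<le> beta (card J) m * (b - e) + real (card J choose m) * e +
        (beta (card J) (m - 1) * (a - c) + real (card J choose (m - 1)) * c)"
      unfolding Seq using IH1 IH2 by simp
    also have "\<dots> \<le> beta (Suc (card J)) m * (a - e) + real (Suc (card J) choose m) * e"
      using numeric_step[of m a b c e "card J"] m1 key N0 by linarith
    finally show ?thesis using insert unfolding a_def e_def by simp
  qed
qed

lemma variance_drop:
  assumes "finite J" "J \<subseteq> J0" "f \<in> V" "card J \<ge> 1" "m \<ge> 1" "ip (P J f) f = 0"
  shows "(\<Sum>s \<in> {s. s \<subseteq> J \<and> card s = m}. ip (P (J - s) f) (P (J - s) f))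
       \<le> real ((card J - 1) choose (m - 1)) * ip f f"
proof -
  have "(\<Sum>s \<in> {s. s \<subseteq> J \<and> card s = m}. ip (P (J - s) f) (P (J - s) f)) = S J f m"
    unfolding S_def
  proof (intro sum.cong refl)
    fix s assume "s \<in> {s. s \<subseteq> J \<and> card s = m}"
    have B: "J - s \<subseteq> J0" using assms by auto
    show "ip (P (J - s) f) (P (J - s) f) = ip (P (J - s) f) f"
      using P_sa[OF B P_V[OF B assms(3)] assms(3)] P_idem[OF B assms(3)] by simp
  qed
  also have "\<dots> \<le> beta (card J) m * (ip f f - ip (P J f) f) + real (card J choose m) * ip (P J f) f"
    using S_ineq assms by blast
  also have "\<dots> = real ((card J - 1) choose (m - 1)) * ip f f"
    using assms beta_eq by simp
  finally show ?thesis .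
qed

end


lemma pow_bound_aux:
  fixes x :: real
  shows "(1 + \<bar>x\<bar>) ^ (2 * k) \<le> 4 ^ k * (1 + x ^ (2 * k))"
proof (cases "\<bar>x\<bar> \<le> 1")
  case True
  have "(1 + \<bar>x\<bar>) ^ (2 * k) \<le> 2 ^ (2 * k)" using True by (intro power_mono) auto
  also have "\<dots> = 4 ^ k" by (simp add: power_mult)
  also have "\<dots> \<le> 4 ^ k * (1 + x ^ (2 * k))" by (simp add: power_mult)
  finally show ?thesis .
next
  case False
  have "(1 + \<bar>x\<bar>) ^ (2 * k) \<le> (2 * \<bar>x\<bar>) ^ (2 * k)" using False by (intro power_mono) auto
  also have "\<dots> = 4 ^ k * \<bar>x\<bar> ^ (2 * k)" by (simp add: power_mult_distrib power_mult)
  also have "\<bar>x\<bar> ^ (2 * k) = x ^ (2 * k)" by (simp add: power_even_abs)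
  also have "4 ^ k * x ^ (2 * k) \<le> 4 ^ k * (1 + x ^ (2 * k))" by simp
  finally show ?thesis .
qed

locale pit =
  fixes F :: "nat \<Rightarrow> real measure" and N n k :: nat
  assumes k1: "k \<ge> 1" and n1: "n \<ge> 1" and N1: "N \<ge> 1"
  and Fprob: "\<And>j. j \<in> {1..N} \<Longrightarrow> prob_space (F j)"
  and Fsets: "\<And>j. j \<in> {1..N} \<Longrightarrow> sets (F j) = sets borel"
  and Fmom: "\<And>j. j \<in> {1..N} \<Longrightarrow> integrable (F j) (\<lambda>x. x ^ (2 * k))"
begin

definition "J = {1..N}"
definition "K = J \<times> {..<n}"
definition Fp :: "nat \<times> nat \<Rightarrow> real measure" where
  "Fp p = (if fst p \<in> J then F (fst p) else F 1)"
definition "\<Omega> = PiM K Fp"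
definition W :: "(nat \<times> nat \<Rightarrow> real) \<Rightarrow> real" where "W \<omega> = (\<Prod>p\<in>K. 1 + \<bar>\<omega> p\<bar>)"
definition "Kb B = B \<times> {..<n}"
definition P :: "nat set \<Rightarrow> ((nat \<times> nat \<Rightarrow> real) \<Rightarrow> real) \<Rightarrow> (nat \<times> nat \<Rightarrow> real) \<Rightarrow> real" where
  "P B f \<omega> = (\<integral>\<eta>. f (merge (K - Kb B) (Kb B) (\<omega>, \<eta>)) \<partial>PiM (Kb B) Fp)"
definition "C = {f. f \<in> borel_measurable \<Omega> \<and> (\<exists>c\<ge>0. \<forall>\<omega>\<in>space \<Omega>. \<bar>f \<omega>\<bar> \<le> c * W \<omega> ^ k)}"
definition ip :: "((nat \<times> nat \<Rightarrow> real) \<Rightarrow> real) \<Rightarrow> ((nat \<times> nat \<Rightarrow> real) \<Rightarrow> real) \<Rightarrow> real" where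
  "ip f g = (\<integral>\<omega>. f \<omega> * g \<omega> \<partial>\<Omega>)"

lemma finJ: "finite J" and finK: "finite K" and finKb: "finite B \<Longrightarrow> finite (Kb B)"
  unfolding J_def K_def Kb_def by auto

lemma oneJ: "1 \<in> J" using N1 unfolding J_def by auto

lemma Fp_F: "fst p \<in> J \<Longrightarrow> Fp p = F (fst p)" unfolding Fp_def by simp

lemma Fp_prob: "prob_space (Fp p)"
  unfolding Fp_def using Fprob oneJ unfolding J_def by auto

lemma Fp_sets: "sets (Fp p) = sets borel"
  unfolding Fp_def using Fsets oneJ unfolding J_def by auto

lemma Fp_space: "space (Fp p) = UNIV"
  using sets_eq_imp_space_eq[OF Fp_sets] by simp

sublocale Fpp: product_prob_space Fp
  by (rule product_prob_spaceI) (rule Fp_prob)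

lemma space_PiM_Fp: "space (PiM I Fp) = extensional I"
  by (auto simp: space_PiM PiE_def Fp_space)

lemma prob_PiM_Fp: "prob_space (PiM I Fp)"
  by (intro prob_space_PiM Fp_prob)

lemma prob_Omega: "prob_space \<Omega>"
  unfolding \<Omega>_def by (rule prob_PiM_Fp)

lemma Kb_sub: "B \<subseteq> J \<Longrightarrow> Kb B \<subseteq> K" unfolding Kb_def K_def by auto

lemma meas_Fp: "f \<in> borel_measurable borel \<Longrightarrow> f \<in> borel_measurable (Fp p)"
  using measurable_cong_sets[OF Fp_sets refl] by blast

lemma mom_Fp: "d \<le> 2 * k \<Longrightarrow> integrable (Fp p) (\<lambda>x. (1 + \<bar>x\<bar>) ^ d)"
proof -
  assume d: "d \<le> 2 * k"
  define j where "j = (if fst p \<in> J then fst p else 1)"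
  have j: "j \<in> {1..N}" "Fp p = F j" unfolding j_def Fp_def using oneJ J_def by auto
  interpret prob_space "F j" using Fprob j by simp
  have "integrable (F j) (\<lambda>x. 4 ^ k * (1 + x ^ (2 * k)))"
    using Fmom[OF j(1)] by (intro integrable_mult_right integrable_add) auto
  moreover have "(\<lambda>x. (1 + \<bar>x\<bar>) ^ d) \<in> borel_measurable (F j)"
    using meas_Fp[of "\<lambda>x. (1 + \<bar>x\<bar>) ^ d" p] j by simp
  moreover have "AE x in F j. norm ((1 + \<bar>x\<bar>) ^ d) \<le> norm (4 ^ k * (1 + x ^ (2 * k)))"
  proof (rule AE_I2)
    fix x :: real
    have "(1 + \<bar>x\<bar>) ^ d \<le> (1 + \<bar>x\<bar>) ^ (2 * k)" using d by (intro power_increasing) auto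
    also have "\<dots> \<le> 4 ^ k * (1 + x ^ (2 * k))" by (rule pow_bound_aux)
    finally show "norm ((1 + \<bar>x\<bar>) ^ d) \<le> norm (4 ^ k * (1 + x ^ (2 * k)))" by simp
  qed
  ultimately have "integrable (F j) (\<lambda>x. (1 + \<bar>x\<bar>) ^ d)"
    by (rule Bochner_Integration.integrable_bound)
  then show ?thesis using j by simp
qed

lemma int_prodpow: "finite I \<Longrightarrow> d \<le> 2 * k \<Longrightarrow> integrable (PiM I Fp) (\<lambda>\<eta>. \<Prod>p\<in>I. (1 + \<bar>\<eta> p\<bar>) ^ d)"
  by (intro Fpp.product_integrable_prod mom_Fp) auto

lemma W_ge1: "W \<omega> \<ge> 1" unfolding W_def by (intro prod_ge_1) auto

lemma W_pow: "W \<omega> ^ d = (\<Prod>p\<in>K. (1 + \<bar>\<omega> p\<bar>) ^ d)"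
  unfolding W_def by (simp add: prod_power_distrib)

lemma comp_meas[measurable]: "p \<in> I \<Longrightarrow> (\<lambda>x. x p) \<in> borel_measurable (PiM I Fp)"
  using measurable_component_singleton[of p I Fp] measurable_cong_sets[OF refl Fp_sets] by blast

lemma W_meas: "W \<in> borel_measurable \<Omega>"
  unfolding W_def \<Omega>_def by measurable

lemma int_W: "d \<le> 2 * k \<Longrightarrow> integrable \<Omega> (\<lambda>\<omega>. W \<omega> ^ d)"
  unfolding W_pow \<Omega>_def using finK by (rule int_prodpow)

lemma C_mult_int: assumes "f \<in> C" "g \<in> C" shows "integrable \<Omega> (\<lambda>\<omega>. f \<omega> * g \<omega>)"
proof -
  obtain cf where cf: "cf \<ge> 0" "\<forall>\<omega>\<in>space \<Omega>. \<bar>f \<omega>\<bar> \<le> cf * W \<omega> ^ k" using assms unfolding C_def by auto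
  obtain cg where cg: "cg \<ge> 0" "\<forall>\<omega>\<in>space \<Omega>. \<bar>g \<omega>\<bar> \<le> cg * W \<omega> ^ k" using assms unfolding C_def by auto
  have m: "f \<in> borel_measurable \<Omega>" "g \<in> borel_measurable \<Omega>" using assms unfolding C_def by auto
  show ?thesis
  proof (rule Bochner_Integration.integrable_bound[where f = "\<lambda>\<omega>. cf * cg * W \<omega> ^ (2 * k)"])
    show "integrable \<Omega> (\<lambda>\<omega>. cf * cg * W \<omega> ^ (2 * k))" using int_W[of "2 * k"] by simp
    show "(\<lambda>\<omega>. f \<omega> * g \<omega>) \<in> borel_measurable \<Omega>" using m by measurable
    show "AE \<omega> in \<Omega>. norm (f \<omega> * g \<omega>) \<le> norm (cf * cg * W \<omega> ^ (2 * k))"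
    proof (intro AE_I2)
      fix \<omega> assume \<omega>: "\<omega> \<in> space \<Omega>"
      have "\<bar>f \<omega> * g \<omega>\<bar> = \<bar>f \<omega>\<bar> * \<bar>g \<omega>\<bar>" by (simp add: abs_mult)
      also have "\<dots> \<le> (cf * W \<omega> ^ k) * (cg * W \<omega> ^ k)"
        using cf cg \<omega> by (intro mult_mono) auto
      also have "\<dots> = cf * cg * W \<omega> ^ (2 * k)" by (simp add: power_mult algebra_simps power2_eq_square)
      finally show "norm (f \<omega> * g \<omega>) \<le> norm (cf * cg * W \<omega> ^ (2 * k))"
        using cf cg W_ge1[of \<omega>] by simp
    qed
  qed
qed

lemma C_I: "f \<in> borel_measurable \<Omega> \<Longrightarrow> (\<And>\<omega>. \<omega> \<in> space \<Omega> \<Longrightarrow> \<bar>f \<omega>\<bar> \<le> c * W \<omega> ^ k) \<Longrightarrow> f \<in> C"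
proof -
  assume m: "f \<in> borel_measurable \<Omega>" and b: "\<And>\<omega>. \<omega> \<in> space \<Omega> \<Longrightarrow> \<bar>f \<omega>\<bar> \<le> c * W \<omega> ^ k"
  have "\<forall>\<omega>\<in>space \<Omega>. \<bar>f \<omega>\<bar> \<le> max c 0 * W \<omega> ^ k"
  proof
    fix \<omega> assume "\<omega> \<in> space \<Omega>"
    then have "\<bar>f \<omega>\<bar> \<le> c * W \<omega> ^ k" by (rule b)
    also have "\<dots> \<le> max c 0 * W \<omega> ^ k" using W_ge1[of \<omega>] by (intro mult_right_mono) auto
    finally show "\<bar>f \<omega>\<bar> \<le> max c 0 * W \<omega> ^ k" .
  qed
  then show "f \<in> C" unfolding C_def using m by (intro CollectI conjI exI[of _ "max c 0"]) auto
qed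

lemma C_E: "f \<in> C \<Longrightarrow> (\<And>c. c \<ge> 0 \<Longrightarrow> f \<in> borel_measurable \<Omega> \<Longrightarrow> (\<And>\<omega>. \<omega> \<in> space \<Omega> \<Longrightarrow> \<bar>f \<omega>\<bar> \<le> c * W \<omega> ^ k) \<Longrightarrow> thesis) \<Longrightarrow> thesis"
  unfolding C_def by auto

sublocale sip C ip
proof
  fix f g assume f: "f \<in> C" and g: "g \<in> C"
  obtain cf where cf: "cf \<ge> 0" "f \<in> borel_measurable \<Omega>" "\<And>\<omega>. \<omega> \<in> space \<Omega> \<Longrightarrow> \<bar>f \<omega>\<bar> \<le> cf * W \<omega> ^ k"
    using f unfolding C_def by auto
  obtain cg where cg: "cg \<ge> 0" "g \<in> borel_measurable \<Omega>" "\<And>\<omega>. \<omega> \<in> space \<Omega> \<Longrightarrow> \<bar>g \<omega>\<bar> \<le> cg * W \<omega> ^ k"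
    using g unfolding C_def by auto
  show "(\<lambda>x. f x - g x) \<in> C"
  proof (rule C_I[where c = "cf + cg"])
    show "(\<lambda>x. f x - g x) \<in> borel_measurable \<Omega>" using cf cg by measurable
    fix \<omega> assume "\<omega> \<in> space \<Omega>"
    then show "\<bar>f \<omega> - g \<omega>\<bar> \<le> (cf + cg) * W \<omega> ^ k" using cf(3)[of \<omega>] cg(3)[of \<omega>] by (simp add: algebra_simps)
  qed
  show "(\<lambda>x. f x + g x) \<in> C"
  proof (rule C_I[where c = "cf + cg"])
    show "(\<lambda>x. f x + g x) \<in> borel_measurable \<Omega>" using cf cg by measurable
    fix \<omega> assume "\<omega> \<in> space \<Omega>"
    then show "\<bar>f \<omega> + g \<omega>\<bar> \<le> (cf + cg) * W \<omega> ^ k" using cf(3)[of \<omega>] cg(3)[of \<omega>] by (simp add: algebra_simps)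
  qed
  show "ip f g = ip g f" unfolding ip_def by (simp add: mult.commute)
next
  fix f c assume f: "f \<in> C"
  obtain cf where cf: "cf \<ge> 0" "f \<in> borel_measurable \<Omega>" "\<And>\<omega>. \<omega> \<in> space \<Omega> \<Longrightarrow> \<bar>f \<omega>\<bar> \<le> cf * W \<omega> ^ k"
    using f unfolding C_def by auto
  show "(\<lambda>x. c * f x) \<in> C"
  proof (rule C_I[where c = "\<bar>c\<bar> * cf"])
    show "(\<lambda>x. c * f x) \<in> borel_measurable \<Omega>" using cf by measurable
    fix \<omega> assume "\<omega> \<in> space \<Omega>"
    then show "\<bar>c * f \<omega>\<bar> \<le> \<bar>c\<bar> * cf * W \<omega> ^ k" using cf(3)[of \<omega>]
      by (simp add: abs_mult mult.assoc mult_left_mono)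
  qed
next
  show "(\<lambda>x. 0) \<in> C" by (rule C_I[where c = 0]) auto
next
  fix f g h assume f: "f \<in> C" and g: "g \<in> C" and h: "h \<in> C"
  show "ip (\<lambda>x. f x + g x) h = ip f h + ip g h"
    unfolding ip_def using C_mult_int[OF f h] C_mult_int[OF g h] by (simp add: distrib_right)
  show "ip (\<lambda>x. f x - g x) h = ip f h - ip g h"
    unfolding ip_def using C_mult_int[OF f h] C_mult_int[OF g h] by (simp add: left_diff_distrib)
next
  fix f h c assume f: "f \<in> C" and h: "h \<in> C"
  show "ip (\<lambda>x. c * f x) h = c * ip f h"
    unfolding ip_def by (simp add: mult.assoc)
next
  fix f assume "f \<in> C"
  show "0 \<le> ip f f" unfolding ip_def by (intro Bochner_Integration.integral_nonneg) auto
qed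

end


context pit
begin

lemma KKb: "B \<subseteq> J \<Longrightarrow> (K - Kb B) \<union> Kb B = K" using Kb_sub by auto

lemma space_Omega: "space \<Omega> = extensional K" unfolding \<Omega>_def by (rule space_PiM_Fp)

lemma merge_in: "B \<subseteq> J \<Longrightarrow> merge (K - Kb B) (Kb B) (\<omega>, \<eta>) \<in> space \<Omega>"
  unfolding space_Omega using extensional_merge[of "K - Kb B" "Kb B" \<omega> \<eta>] KKb by simp

lemma W_merge:
  assumes B: "B \<subseteq> J"
  shows "W (merge (K - Kb B) (Kb B) (\<omega>, \<eta>)) \<le> W \<omega> * (\<Prod>p\<in>Kb B. 1 + \<bar>\<eta> p\<bar>)"
proof -
  have sub: "Kb B \<subseteq> K" using Kb_sub[OF B] .
  have "W (merge (K - Kb B) (Kb B) (\<omega>, \<eta>)) =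
      (\<Prod>p\<in>K - Kb B. 1 + \<bar>merge (K - Kb B) (Kb B) (\<omega>, \<eta>) p\<bar>) * (\<Prod>p\<in>Kb B. 1 + \<bar>merge (K - Kb B) (Kb B) (\<omega>, \<eta>) p\<bar>)"
    unfolding W_def by (rule prod.subset_diff[OF sub finK])
  also have "\<dots> = (\<Prod>p\<in>K - Kb B. 1 + \<bar>\<omega> p\<bar>) * (\<Prod>p\<in>Kb B. 1 + \<bar>\<eta> p\<bar>)"
    by (intro arg_cong2[where f = "(*)"] prod.cong) (auto simp: merge_def)
  also have "\<dots> \<le> W \<omega> * (\<Prod>p\<in>Kb B. 1 + \<bar>\<eta> p\<bar>)"
    unfolding W_def by (intro mult_right_mono prod_mono2 finK prod_nonneg) auto
  finally show ?thesis .
qed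

lemma W_merge_pow:
  assumes B: "B \<subseteq> J"
  shows "W (merge (K - Kb B) (Kb B) (\<omega>, \<eta>)) ^ k \<le> W \<omega> ^ k * (\<Prod>p\<in>Kb B. (1 + \<bar>\<eta> p\<bar>) ^ k)"
proof -
  have "W (merge (K - Kb B) (Kb B) (\<omega>, \<eta>)) ^ k \<le> (W \<omega> * (\<Prod>p\<in>Kb B. 1 + \<bar>\<eta> p\<bar>)) ^ k"
    using W_merge[OF B] W_ge1 by (intro power_mono) (auto intro: order_trans[OF zero_le_one])
  also have "\<dots> = W \<omega> ^ k * (\<Prod>p\<in>Kb B. (1 + \<bar>\<eta> p\<bar>) ^ k)"
    by (simp add: power_mult_distrib prod_power_distrib)
  finally show ?thesis .
qed

lemma merge_meas:
  assumes B: "B \<subseteq> J"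
  shows "(\<lambda>\<eta>. merge (K - Kb B) (Kb B) (\<omega>, \<eta>)) \<in> measurable (PiM (Kb B) Fp) \<Omega>"
proof -
  have r: "restrict \<omega> (K - Kb B) \<in> space (PiM (K - Kb B) Fp)" unfolding space_PiM_Fp by simp
  have "(\<lambda>\<eta>. merge (K - Kb B) (Kb B) (restrict \<omega> (K - Kb B), \<eta>)) \<in> measurable (PiM (Kb B) Fp) (PiM ((K - Kb B) \<union> Kb B) Fp)"
    by (rule measurable_Pair2[OF measurable_merge r])
  then show ?thesis unfolding \<Omega>_def KKb[OF B] by simp
qed

lemma merge_meas2:
  assumes B: "B \<subseteq> J"
  shows "(\<lambda>(\<omega>, \<eta>). merge (K - Kb B) (Kb B) (\<omega>, \<eta>)) \<in> measurable (\<Omega> \<Otimes>\<^sub>M PiM (Kb B) Fp) \<Omega>"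
proof -
  have m1: "(\<lambda>(\<omega>, \<eta>). (restrict \<omega> (K - Kb B), \<eta>)) \<in> measurable (\<Omega> \<Otimes>\<^sub>M PiM (Kb B) Fp) (PiM (K - Kb B) Fp \<Otimes>\<^sub>M PiM (Kb B) Fp)"
    unfolding \<Omega>_def by (auto intro!: measurable_Pair measurable_comp[OF measurable_fst measurable_restrict_subset] simp: split_beta')
  have "(\<lambda>x. merge (K - Kb B) (Kb B) ((\<lambda>(\<omega>, \<eta>). (restrict \<omega> (K - Kb B), \<eta>)) x)) \<in> measurable (\<Omega> \<Otimes>\<^sub>M PiM (Kb B) Fp) (PiM ((K - Kb B) \<union> Kb B) Fp)"
    using measurable_comp[OF m1 measurable_merge] by (simp add: comp_def)
  then show ?thesis unfolding \<Omega>_def KKb[OF B] by (simp add: split_beta')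
qed

lemma C_bound: "f \<in> C \<Longrightarrow> \<exists>c\<ge>0. \<forall>\<omega>\<in>space \<Omega>. \<bar>f \<omega>\<bar> \<le> c * W \<omega> ^ k" unfolding C_def by auto
lemma C_meas: "f \<in> C \<Longrightarrow> f \<in> borel_measurable \<Omega>" unfolding C_def by auto

lemma P_int:
  assumes f: "f \<in> C" and B: "B \<subseteq> J"
  shows "integrable (PiM (Kb B) Fp) (\<lambda>\<eta>. f (merge (K - Kb B) (Kb B) (\<omega>, \<eta>)))"
proof -
  obtain c where c: "c \<ge> 0" "\<forall>\<omega>\<in>space \<Omega>. \<bar>f \<omega>\<bar> \<le> c * W \<omega> ^ k" using C_bound[OF f] by auto
  have fin: "finite (Kb B)" using B finJ by (intro finKb) (auto dest: finite_subset)
  show ?thesis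
  proof (rule Bochner_Integration.integrable_bound[where f = "\<lambda>\<eta>. c * W \<omega> ^ k * (\<Prod>p\<in>Kb B. (1 + \<bar>\<eta> p\<bar>) ^ k)"])
    show "integrable (PiM (Kb B) Fp) (\<lambda>\<eta>. c * W \<omega> ^ k * (\<Prod>p\<in>Kb B. (1 + \<bar>\<eta> p\<bar>) ^ k))"
      using int_prodpow[OF fin, of k] by simp
    show "(\<lambda>\<eta>. f (merge (K - Kb B) (Kb B) (\<omega>, \<eta>))) \<in> borel_measurable (PiM (Kb B) Fp)"
      using measurable_comp[OF merge_meas[OF B] C_meas[OF f]] by (simp add: comp_def)
    show "AE \<eta> in PiM (Kb B) Fp. norm (f (merge (K - Kb B) (Kb B) (\<omega>, \<eta>))) \<le> norm (c * W \<omega> ^ k * (\<Prod>p\<in>Kb B. (1 + \<bar>\<eta> p\<bar>) ^ k))"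
    proof (rule AE_I2)
      fix \<eta>
      have "\<bar>f (merge (K - Kb B) (Kb B) (\<omega>, \<eta>))\<bar> \<le> c * W (merge (K - Kb B) (Kb B) (\<omega>, \<eta>)) ^ k"
        using c merge_in[OF B] by blast
      also have "\<dots> \<le> c * (W \<omega> ^ k * (\<Prod>p\<in>Kb B. (1 + \<bar>\<eta> p\<bar>) ^ k))"
        using c W_merge_pow[OF B] by (intro mult_left_mono) auto
      finally show "norm (f (merge (K - Kb B) (Kb B) (\<omega>, \<eta>))) \<le> norm (c * W \<omega> ^ k * (\<Prod>p\<in>Kb B. (1 + \<bar>\<eta> p\<bar>) ^ k))"
        using c W_ge1[of \<omega>] by (simp add: mult.assoc prod_nonneg)
    qed
  qed
qed

lemma P_meas:
  assumes f: "f \<in> C" and B: "B \<subseteq> J"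
  shows "P B f \<in> borel_measurable \<Omega>"
proof -
  interpret S: prob_space "PiM (Kb B) Fp" by (rule prob_PiM_Fp)
  have "(\<lambda>x. f ((\<lambda>(\<omega>, \<eta>). merge (K - Kb B) (Kb B) (\<omega>, \<eta>)) x)) \<in> borel_measurable (\<Omega> \<Otimes>\<^sub>M PiM (Kb B) Fp)"
    using measurable_comp[OF merge_meas2[OF B] C_meas[OF f]] by (simp add: comp_def)
  then have "case_prod (\<lambda>\<omega> \<eta>. f (merge (K - Kb B) (Kb B) (\<omega>, \<eta>))) \<in> borel_measurable (\<Omega> \<Otimes>\<^sub>M PiM (Kb B) Fp)"
    by (simp add: split_beta')
  then show ?thesis unfolding P_def by (rule S.borel_measurable_lebesgue_integral)
qed

lemma P_C:
  assumes f: "f \<in> C" and B: "B \<subseteq> J"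
  shows "P B f \<in> C"
proof -
  obtain c where c: "c \<ge> 0" "\<forall>\<omega>\<in>space \<Omega>. \<bar>f \<omega>\<bar> \<le> c * W \<omega> ^ k" using C_bound[OF f] by auto
  have fin: "finite (Kb B)" using B finJ by (intro finKb) (auto dest: finite_subset)
  define I where "I = (\<integral>\<eta>. (\<Prod>p\<in>Kb B. (1 + \<bar>\<eta> p\<bar>) ^ k) \<partial>PiM (Kb B) Fp)"
  show ?thesis
  proof (rule C_I[where c = "c * I"])
    show "P B f \<in> borel_measurable \<Omega>" by (rule P_meas[OF f B])
    fix \<omega> assume "\<omega> \<in> space \<Omega>"
    have "\<bar>P B f \<omega>\<bar> \<le> (\<integral>\<eta>. \<bar>f (merge (K - Kb B) (Kb B) (\<omega>, \<eta>))\<bar> \<partial>PiM (Kb B) Fp)"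
      unfolding P_def by (rule integral_abs_bound)
    also have "\<dots> \<le> (\<integral>\<eta>. c * W \<omega> ^ k * (\<Prod>p\<in>Kb B. (1 + \<bar>\<eta> p\<bar>) ^ k) \<partial>PiM (Kb B) Fp)"
    proof (rule integral_mono)
      show "integrable (PiM (Kb B) Fp) (\<lambda>\<eta>. \<bar>f (merge (K - Kb B) (Kb B) (\<omega>, \<eta>))\<bar>)"
        using P_int[OF f B] by (rule integrable_abs)
      show "integrable (PiM (Kb B) Fp) (\<lambda>\<eta>. c * W \<omega> ^ k * (\<Prod>p\<in>Kb B. (1 + \<bar>\<eta> p\<bar>) ^ k))"
        using int_prodpow[OF fin, of k] by simp
      fix \<eta>
      have "\<bar>f (merge (K - Kb B) (Kb B) (\<omega>, \<eta>))\<bar> \<le> c * W (merge (K - Kb B) (Kb B) (\<omega>, \<eta>)) ^ k"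
        using c merge_in[OF B] by blast
      also have "\<dots> \<le> c * (W \<omega> ^ k * (\<Prod>p\<in>Kb B. (1 + \<bar>\<eta> p\<bar>) ^ k))"
        using c W_merge_pow[OF B] by (intro mult_left_mono) auto
      finally show "\<bar>f (merge (K - Kb B) (Kb B) (\<omega>, \<eta>))\<bar> \<le> c * W \<omega> ^ k * (\<Prod>p\<in>Kb B. (1 + \<bar>\<eta> p\<bar>) ^ k)"
        by (simp add: mult.assoc)
    qed
    also have "\<dots> = c * I * W \<omega> ^ k" unfolding I_def by (simp add: algebra_simps)
    finally show "\<bar>P B f \<omega>\<bar> \<le> c * I * W \<omega> ^ k" .
  qed
qed

lemma P_dep:
  assumes "\<And>p. p \<in> K - Kb B \<Longrightarrow> \<omega> p = \<omega>' p"
  shows "P B f \<omega> = P B f \<omega>'"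
proof -
  have "merge (K - Kb B) (Kb B) (\<omega>, \<eta>) = merge (K - Kb B) (Kb B) (\<omega>', \<eta>)" for \<eta>
    using assms by (auto simp: merge_def fun_eq_iff)
  then show ?thesis unfolding P_def by simp
qed

lemma P_merge: "P B f (merge (K - Kb B) (Kb B) (\<omega>, \<eta>)) = P B f \<omega>"
  by (rule P_dep) (auto simp: merge_def)

lemma P_idem:
  assumes B: "B \<subseteq> J"
  shows "P B (P B f) = P B f"
proof
  fix \<omega>
  interpret S: prob_space "PiM (Kb B) Fp" by (rule prob_PiM_Fp)
  have "P B (P B f) \<omega> = (\<integral>\<eta>. P B f \<omega> \<partial>PiM (Kb B) Fp)"
    unfolding P_def[of B "P B f"] by (simp add: P_merge)
  also have "\<dots> = P B f \<omega>" by (simp add: S.prob_space)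
  finally show "P B (P B f) \<omega> = P B f \<omega>" .
qed

lemma P_sa_aux:
  assumes f: "f \<in> C" and g: "g \<in> C" and B: "B \<subseteq> J"
  shows "ip (P B f) g = (\<integral>x. P B f x * P B g x \<partial>PiM (K - Kb B) Fp)"
proof -
  have fin: "finite (Kb B)" using B finJ by (intro finKb) (auto dest: finite_subset)
  have int: "integrable (PiM ((K - Kb B) \<union> Kb B) Fp) (\<lambda>\<omega>. P B f \<omega> * g \<omega>)"
    using C_mult_int[OF P_C[OF f B] g] unfolding \<Omega>_def KKb[OF B] .
  have "ip (P B f) g = (\<integral>\<omega>. P B f \<omega> * g \<omega> \<partial>PiM ((K - Kb B) \<union> Kb B) Fp)"
    unfolding ip_def \<Omega>_def KKb[OF B] ..
  also have "\<dots> = (\<integral>x. (\<integral>y. P B f (merge (K - Kb B) (Kb B) (x, y)) * g (merge (K - Kb B) (Kb B) (x, y)) \<partial>PiM (Kb B) Fp) \<partial>PiM (K - Kb B) Fp)"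
    using int by (intro Fpp.product_integral_fold) (auto intro: finite_subset[OF _ finK] fin)
  also have "\<dots> = (\<integral>x. P B f x * P B g x \<partial>PiM (K - Kb B) Fp)"
    unfolding P_merge by (simp add: P_def[of B g])
  finally show ?thesis .
qed

lemma P_sa:
  assumes f: "f \<in> C" and g: "g \<in> C" and B: "B \<subseteq> J"
  shows "ip (P B f) g = ip f (P B g)"
  using P_sa_aux[OF f g B] P_sa_aux[OF g f B] ip_sym[OF f P_C[OF g B]]
  by (simp add: mult.commute)

lemma Kb_union: "Kb (B \<union> B') = Kb B \<union> Kb B'" unfolding Kb_def by auto

lemma P_union:
  assumes f: "f \<in> C" and B: "B \<subseteq> J" and B': "B' \<subseteq> J" and d: "B \<inter> B' = {}"
  shows "P (B \<union> B') f = P B (P B' f)"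
proof
  fix \<omega>
  have BB: "B \<union> B' \<subseteq> J" using B B' by auto
  have fin: "finite (Kb B)" "finite (Kb B')" using B B' finJ by (auto intro!: finKb dest: finite_subset)
  have dK: "Kb B \<inter> Kb B' = {}" using d unfolding Kb_def by auto
  have int: "integrable (PiM (Kb B \<union> Kb B') Fp) (\<lambda>\<eta>. f (merge (K - Kb (B \<union> B')) (Kb (B \<union> B')) (\<omega>, \<eta>)))"
    using P_int[OF f BB] unfolding Kb_union .
  have "P (B \<union> B') f \<omega> = (\<integral>\<eta>. f (merge (K - Kb (B \<union> B')) (Kb (B \<union> B')) (\<omega>, \<eta>)) \<partial>PiM (Kb B \<union> Kb B') Fp)"
    unfolding P_def Kb_union ..
  also have "\<dots> = (\<integral>x. (\<integral>y. f (merge (K - Kb (B \<union> B')) (Kb (B \<union> B')) (\<omega>, merge (Kb B) (Kb B') (x, y))) \<partial>PiM (Kb B') Fp) \<partial>PiM (Kb B) Fp)"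
    using int dK fin by (intro Fpp.product_integral_fold) auto
  also have "\<dots> = P B (P B' f) \<omega>"
    unfolding P_def[of B] P_def[of B']
  proof (intro Bochner_Integration.integral_cong refl arg_cong[where f = f])
    fix x y
    show "merge (K - Kb (B \<union> B')) (Kb (B \<union> B')) (\<omega>, merge (Kb B) (Kb B') (x, y)) =
          merge (K - Kb B') (Kb B') (merge (K - Kb B) (Kb B) (\<omega>, x), y)"
      using dK Kb_sub[OF B] Kb_sub[OF B'] unfolding Kb_union by (auto simp: merge_def fun_eq_iff)
  qed
  finally show "P (B \<union> B') f \<omega> = P B (P B' f) \<omega>" .
qed

lemma P_diff:
  assumes f: "f \<in> C" and g: "g \<in> C" and B: "B \<subseteq> J"
  shows "P B (\<lambda>x. f x - g x) = (\<lambda>x. P B f x - P B g x)"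
  unfolding P_def using P_int[OF f B] P_int[OF g B] by (simp add: fun_eq_iff)

lemma P_empty:
  assumes f: "f \<in> C"
  shows "ip (P {} f) f = ip f f"
proof -
  interpret S: prob_space "PiM (Kb {}) Fp" by (rule prob_PiM_Fp)
  have "P {} f \<omega> = f \<omega>" if "\<omega> \<in> space \<Omega>" for \<omega>
  proof -
    have "merge (K - Kb {}) (Kb {}) (\<omega>, \<eta>) = \<omega>" for \<eta>
      using that unfolding space_Omega by (auto simp: merge_def Kb_def fun_eq_iff extensional_def)
    then show ?thesis unfolding P_def by (simp add: S.prob_space)
  qed
  then show ?thesis unfolding ip_def by (intro Bochner_Integration.integral_cong) auto
qed

lemma P_full:
  assumes f: "f \<in> C"
  shows "P J f \<omega> = (\<integral>\<omega>. f \<omega> \<partial>\<Omega>)"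
proof -
  have KbJ: "Kb J = K" unfolding Kb_def K_def ..
  have "P J f \<omega> = (\<integral>\<eta>. f (merge {} K (\<omega>, \<eta>)) \<partial>\<Omega>)" unfolding P_def KbJ \<Omega>_def by simp
  also have "\<dots> = (\<integral>\<eta>. f \<eta> \<partial>\<Omega>)"
  proof (intro Bochner_Integration.integral_cong refl arg_cong[where f = f])
    fix \<eta> assume "\<eta> \<in> space \<Omega>"
    then show "merge {} K (\<omega>, \<eta>) = \<eta>" unfolding space_Omega by (auto simp: merge_def fun_eq_iff extensional_def)
  qed
  finally show ?thesis .
qed

sublocale anova C ip P J
proof
  fix B f assume "B \<subseteq> J" "f \<in> C" then show "P B f \<in> C" by (intro P_C)
next
  fix f assume "f \<in> C" then show "ip (P {} f) f = ip f f" by (rule P_empty)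
next
  fix B f assume "B \<subseteq> J" "f \<in> C" then show "P B (P B f) = P B f" by (intro P_idem)
next
  fix B f g assume "B \<subseteq> J" "f \<in> C" "g \<in> C" then show "ip (P B f) g = ip f (P B g)" by (intro P_sa)
next
  fix B B' f assume "B \<subseteq> J" "B' \<subseteq> J" "B \<inter> B' = {}" "f \<in> C"
  then show "P (B \<union> B') f = P B (P B' f)" by (intro P_union)
next
  fix B f g assume "B \<subseteq> J" "f \<in> C" "g \<in> C" then show "P B (\<lambda>x. f x - g x) = (\<lambda>x. P B f x - P B g x)" by (intro P_diff)
qed

end


lemma insort_append: "(\<And>y. y \<in> set xs \<Longrightarrow> y < x) \<Longrightarrow> insort x xs = xs @ [x]"
proof (induction xs)
  case Nil then show ?case by simp
next
  case (Cons a xs)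
  then have "a < x" by auto
  then have nle: "\<not> x \<le> a" by (simp add: not_le)
  have IH: "insort x xs = xs @ [x]" using Cons by auto
  show ?case using nle IH by simp
qed

lemma conv_set_insert:
  assumes "finite s0" "\<And>y. y \<in> s0 \<Longrightarrow> y < a"
  shows "conv_set F (insert a s0) = (F a \<star> conv_set F s0)"
proof -
  have "a \<notin> s0" using assms by auto
  then have "sorted_list_of_set (insert a s0) = sorted_list_of_set s0 @ [a]"
    using assms by (simp add: sorted_list_of_set_insert, intro insort_append) auto
  then show ?thesis unfolding conv_set_def by simp
qed

lemma conv_set_empty: "conv_set F {} = return borel 0"
  unfolding conv_set_def by simp

context pit
begin

definition Xs :: "nat set \<Rightarrow> (nat \<times> nat \<Rightarrow> real) \<Rightarrow> (nat \<Rightarrow> real)" where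
  "Xs s \<omega> = (\<lambda>i\<in>{..<n}. \<Sum>j\<in>s. \<omega> (j, i))"

lemma K_ne: "K \<noteq> {}"
proof -
  have "(1, 0) \<in> K" using oneJ n1 unfolding K_def by auto
  then show ?thesis by auto
qed

lemma coords_indep: "prob_space.indep_vars \<Omega> Fp (\<lambda>p \<omega>. \<omega> p) K"
proof -
  interpret Om: prob_space \<Omega> by (rule prob_Omega)
  have rv: "\<And>p. p \<in> K \<Longrightarrow> (\<lambda>\<omega>. \<omega> p) \<in> measurable \<Omega> (Fp p)"
    unfolding \<Omega>_def by (rule measurable_component_singleton)
  have "distr \<Omega> (PiM K Fp) (\<lambda>x. \<lambda>p\<in>K. x p) = distr \<Omega> \<Omega> (\<lambda>x. x)"
    unfolding \<Omega>_def by (intro distr_cong) (auto simp: space_PiM_Fp extensional_restrict)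
  also have "\<dots> = \<Omega>" by (rule distr_id)
  also have "\<dots> = PiM K (\<lambda>p. distr \<Omega> (Fp p) (\<lambda>\<omega>. \<omega> p))"
    unfolding \<Omega>_def by (intro PiM_cong refl distr_PiM_component[symmetric] Fp_prob) auto
  finally show ?thesis using Om.indep_vars_iff_distr_eq_PiM'[OF K_ne rv] by simp
qed

lemma comp_distr: "p \<in> K \<Longrightarrow> distr \<Omega> borel (\<lambda>\<omega>. \<omega> p) = Fp p"
proof -
  assume p: "p \<in> K"
  have "distr \<Omega> borel (\<lambda>\<omega>. \<omega> p) = distr \<Omega> (Fp p) (\<lambda>\<omega>. \<omega> p)"
    by (intro distr_cong refl) (simp add: Fp_sets)
  also have "\<dots> = Fp p" unfolding \<Omega>_def using p by (intro distr_PiM_component Fp_prob)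
  finally show ?thesis .
qed

lemma sum_meas[measurable]: "finite s \<Longrightarrow> (\<And>j. j \<in> s \<Longrightarrow> (j, i) \<in> I) \<Longrightarrow> (\<lambda>x. \<Sum>j\<in>s. x (j, i)) \<in> borel_measurable (PiM I Fp)"
  by (intro borel_measurable_sum) auto

lemma distr_sum:
  assumes i: "i < n"
  shows "finite s \<Longrightarrow> s \<subseteq> J \<Longrightarrow> distr \<Omega> borel (\<lambda>\<omega>. \<Sum>j\<in>s. \<omega> (j, i)) = conv_set F s"
proof (induction "card s" arbitrary: s rule: less_induct)
  case less
  interpret Om: prob_space \<Omega> by (rule prob_Omega)
  show ?case
  proof (cases "s = {}")
    case True
    then show ?thesis by (simp add: conv_set_empty Om.distr_const)
  next
    case False
    define a where "a = Max s"
    define s0 where "s0 = s - {a}"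
    have a: "a \<in> s" unfolding a_def using False less by simp
    have s: "s = insert a s0" unfolding s0_def using a by auto
    have lt: "\<And>y. y \<in> s0 \<Longrightarrow> y < a" unfolding s0_def a_def using less by (auto intro: Max_ge le_neq_trans)
    have fin0: "finite s0" using less unfolding s0_def by auto
    have a0: "a \<notin> s0" unfolding s0_def by auto
    have s0J: "s0 \<subseteq> J" using less unfolding s0_def by auto
    have aK: "(a, i) \<in> K" using a less i unfolding K_def by auto
    have cl: "card s0 < card s" unfolding s0_def using less a by (intro card_Diff1_less) auto
    have IH: "distr \<Omega> borel (\<lambda>\<omega>. \<Sum>j\<in>s0. \<omega> (j, i)) = conv_set F s0"
      using less.hyps[OF cl fin0 s0J] .
    have ind0: "Om.indep_var (PiM {(a, i)} Fp) (\<lambda>\<omega>. restrict (\<lambda>p. \<omega> p) {(a, i)})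
                      (PiM (s0 \<times> {i}) Fp) (\<lambda>\<omega>. restrict (\<lambda>p. \<omega> p) (s0 \<times> {i}))"
      by (rule Om.indep_var_restrict[OF coords_indep]) (use a0 aK s0J i in \<open>auto simp: K_def\<close>)
    have m1: "(\<lambda>x. x (a, i)) \<in> measurable (PiM {(a, i)} Fp) borel" by measurable
    have m2: "(\<lambda>x. \<Sum>j\<in>s0. x (j, i)) \<in> measurable (PiM (s0 \<times> {i}) Fp) borel"
      using fin0 by (intro sum_meas) auto
    have ind: "Om.indep_var borel (\<lambda>\<omega>. \<omega> (a, i)) borel (\<lambda>\<omega>. \<Sum>j\<in>s0. \<omega> (j, i))"
      using Om.indep_var_compose[OF ind0 m1 m2] by (simp add: comp_def)
    have "distr \<Omega> borel (\<lambda>\<omega>. \<Sum>j\<in>s. \<omega> (j, i)) = distr \<Omega> borel (\<lambda>\<omega>. \<omega> (a, i) + (\<Sum>j\<in>s0. \<omega> (j, i)))"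
      unfolding s using fin0 a0 by simp
    also have "\<dots> = (distr \<Omega> borel (\<lambda>\<omega>. \<omega> (a, i)) \<star> distr \<Omega> borel (\<lambda>\<omega>. \<Sum>j\<in>s0. \<omega> (j, i)))"
    proof (rule Om.sum_indep_random_variable[OF ind])
      show "(\<lambda>\<omega>. \<omega> (a, i)) \<in> borel_measurable \<Omega>" unfolding \<Omega>_def using aK by measurable
      show "(\<lambda>\<omega>. \<Sum>j\<in>s0. \<omega> (j, i)) \<in> borel_measurable \<Omega>" unfolding \<Omega>_def
        using fin0 s0J i by (intro sum_meas) (auto simp: K_def)
    qed
    also have "\<dots> = (F a \<star> conv_set F s0)"
    proof -
      have "Fp (a, i) = F a" using a less by (auto simp: Fp_def)
      then show ?thesis unfolding IH comp_distr[OF aK] by simp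
    qed
    also have "\<dots> = conv_set F s" unfolding s by (rule conv_set_insert[OF fin0 lt, symmetric])
    finally show ?thesis .
  qed
qed

lemma Xs_meas: "s \<subseteq> J \<Longrightarrow> Xs s \<in> measurable \<Omega> (PiM {..<n} (\<lambda>_. borel))"
  unfolding Xs_def \<Omega>_def
  by (intro measurable_restrict sum_meas) (auto simp: K_def dest: finite_subset[OF _ finJ])

lemma distr_Xs:
  assumes s: "s \<subseteq> J"
  shows "distr \<Omega> (PiM {..<n} (\<lambda>_. borel)) (Xs s) = sample_law n (conv_set F s)"
proof -
  interpret Om: prob_space \<Omega> by (rule prob_Omega)
  have fin: "finite s" using s finJ by (auto dest: finite_subset)
  have dfam: "disjoint_family_on (\<lambda>i. s \<times> {i}) {..<n}" by (auto simp: disjoint_family_on_def)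
  have ind0: "Om.indep_vars (\<lambda>i. PiM (s \<times> {i}) Fp) (\<lambda>i \<omega>. restrict (\<lambda>p. \<omega> p) (s \<times> {i})) {..<n}"
    by (rule Om.indep_vars_restrict[OF coords_indep _ dfam]) (use s in \<open>auto simp: K_def\<close>)
  have ind1: "Om.indep_vars (\<lambda>_. borel) (\<lambda>i \<omega>. (\<lambda>x. \<Sum>j\<in>s. x (j, i)) (restrict (\<lambda>p. \<omega> p) (s \<times> {i}))) {..<n}"
    by (rule Om.indep_vars_compose2[OF ind0]) (use fin in \<open>auto intro: sum_meas\<close>)
  have ind: "Om.indep_vars (\<lambda>_. borel) (\<lambda>i \<omega>. \<Sum>j\<in>s. \<omega> (j, i)) {..<n}"
    using ind1 by (simp add: restrict_def)
  have rv: "\<And>i. i \<in> {..<n} \<Longrightarrow> (\<lambda>\<omega>. \<Sum>j\<in>s. \<omega> (j, i)) \<in> borel_measurable \<Omega>"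
    unfolding \<Omega>_def using fin s by (intro sum_meas) (auto simp: K_def)
  have "0 \<in> {..<n}" using n1 by auto
  then have ne: "{..<n} \<noteq> {}" by auto
  have "distr \<Omega> (PiM {..<n} (\<lambda>_. borel)) (Xs s) = PiM {..<n} (\<lambda>i. distr \<Omega> borel (\<lambda>\<omega>. \<Sum>j\<in>s. \<omega> (j, i)))"
    using Om.indep_vars_iff_distr_eq_PiM'[OF ne rv] ind unfolding Xs_def by simp
  also have "\<dots> = PiM {..<n} (\<lambda>_. conv_set F s)"
    using distr_sum fin s by (intro PiM_cong) auto
  finally show ?thesis unfolding sample_law_def .
qed

end


lemma exps_finite: "finite (exps n k)"
proof -
  have "exps n k \<subseteq> (\<lambda>f. \<lambda>i. if i < n then f i else 0) ` (PiE {..<n} (\<lambda>_. {..k}))"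
  proof
    fix \<alpha> assume a: "\<alpha> \<in> exps n k"
    have le: "\<alpha> i \<le> k" if "i < n" for i
    proof -
      have "\<alpha> i \<le> sum \<alpha> {..<n}" using that by (intro member_le_sum) auto
      then show ?thesis using a unfolding exps_def by simp
    qed
    have "\<alpha> = (\<lambda>i. if i < n then restrict \<alpha> {..<n} i else 0)"
      using a unfolding exps_def by (auto simp: fun_eq_iff)
    moreover have "restrict \<alpha> {..<n} \<in> PiE {..<n} (\<lambda>_. {..k})" using le by auto
    ultimately show "\<alpha> \<in> (\<lambda>f. \<lambda>i. if i < n then f i else 0) ` (PiE {..<n} (\<lambda>_. {..k}))" by blast
  qed
  moreover have "finite (PiE {..<n} (\<lambda>_. {..k::nat}))" by (intro finite_PiE) auto
  ultimately show ?thesis by (auto dest: finite_subset)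
qed

lemma pf_lincomb:
  assumes T: "finite T" and \<beta>: "\<And>t. t \<in> T \<Longrightarrow> sum (\<beta> t) {..<n} \<le> k"
  shows "(\<lambda>x. \<Sum>t\<in>T. a t * (\<Prod>i<n. x i ^ \<beta> t i)) \<in> poly_funs n k"
proof -
  define tr where "tr = (\<lambda>\<beta>::nat\<Rightarrow>nat. \<lambda>i. if i < n then \<beta> i else 0)"
  have tr_in: "tr (\<beta> t) \<in> exps n k" if "t \<in> T" for t
  proof -
    have "(\<Sum>i<n. if i < n then \<beta> t i else 0) = sum (\<beta> t) {..<n}" by (intro sum.cong) auto
    then show ?thesis using \<beta>[OF that] unfolding tr_def exps_def by auto
  qed
  have tr_mono: "(\<Prod>i<n. x i ^ tr \<beta>' i) = (\<Prod>i<n. x i ^ \<beta>' i)" for x :: "nat \<Rightarrow> real" and \<beta>'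
    by (rule prod.cong) (auto simp: tr_def)
  define c where "c = (\<lambda>\<alpha>. \<Sum>t\<in>{t\<in>T. tr (\<beta> t) = \<alpha>}. a t)"
  have "(\<lambda>x. \<Sum>t\<in>T. a t * (\<Prod>i<n. x i ^ \<beta> t i)) = (\<lambda>x. \<Sum>\<alpha>\<in>exps n k. c \<alpha> * (\<Prod>i<n. x i ^ \<alpha> i))"
  proof
    fix x
    have "(\<Sum>\<alpha>\<in>exps n k. c \<alpha> * (\<Prod>i<n. x i ^ \<alpha> i)) =
        (\<Sum>\<alpha>\<in>exps n k. \<Sum>t\<in>{t\<in>T. tr (\<beta> t) = \<alpha>}. a t * (\<Prod>i<n. x i ^ \<beta> t i))"
      unfolding c_def sum_distrib_right
    proof (intro sum.cong refl)
      fix \<alpha> t assume "t \<in> {t\<in>T. tr (\<beta> t) = \<alpha>}"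
      then have "\<alpha> = tr (\<beta> t)" by simp
      then show "a t * (\<Prod>i<n. x i ^ \<alpha> i) = a t * (\<Prod>i<n. x i ^ \<beta> t i)" using tr_mono by simp
    qed
    also have "\<dots> = (\<Sum>t\<in>T. a t * (\<Prod>i<n. x i ^ \<beta> t i))"
      using T tr_in exps_finite by (intro sum.group) auto
    finally show "(\<Sum>t\<in>T. a t * (\<Prod>i<n. x i ^ \<beta> t i)) = (\<Sum>\<alpha>\<in>exps n k. c \<alpha> * (\<Prod>i<n. x i ^ \<alpha> i))" ..
  qed
  then show ?thesis unfolding poly_funs_def by blast
qed

lemma pf_E: "p \<in> poly_funs n k \<Longrightarrow> (\<And>c. p = (\<lambda>x. \<Sum>\<alpha>\<in>exps n k. c \<alpha> * (\<Prod>i<n. x i ^ \<alpha> i)) \<Longrightarrow> thesis) \<Longrightarrow> thesis"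
  unfolding poly_funs_def by blast

lemma pf_add: "p \<in> poly_funs n k \<Longrightarrow> q \<in> poly_funs n k \<Longrightarrow> (\<lambda>x. p x + q x) \<in> poly_funs n k"
proof -
  assume "p \<in> poly_funs n k" "q \<in> poly_funs n k"
  then obtain c d where "p = (\<lambda>x. \<Sum>\<alpha>\<in>exps n k. c \<alpha> * (\<Prod>i<n. x i ^ \<alpha> i))"
    "q = (\<lambda>x. \<Sum>\<alpha>\<in>exps n k. d \<alpha> * (\<Prod>i<n. x i ^ \<alpha> i))" unfolding poly_funs_def by blast
  then have "(\<lambda>x. p x + q x) = (\<lambda>x. \<Sum>\<alpha>\<in>exps n k. (c \<alpha> + d \<alpha>) * (\<Prod>i<n. x i ^ \<alpha> i))"
    by (simp add: distrib_right sum.distrib)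
  then show ?thesis unfolding poly_funs_def by (intro CollectI exI[of _ "\<lambda>\<alpha>. c \<alpha> + d \<alpha>"])
qed

lemma pf_scale: "p \<in> poly_funs n k \<Longrightarrow> (\<lambda>x. a * p x) \<in> poly_funs n k"
proof -
  assume "p \<in> poly_funs n k"
  then obtain c where "p = (\<lambda>x. \<Sum>\<alpha>\<in>exps n k. c \<alpha> * (\<Prod>i<n. x i ^ \<alpha> i))" unfolding poly_funs_def by blast
  then have "(\<lambda>x. a * p x) = (\<lambda>x. \<Sum>\<alpha>\<in>exps n k. (a * c \<alpha>) * (\<Prod>i<n. x i ^ \<alpha> i))"
    by (simp add: sum_distrib_left mult.assoc)
  then show ?thesis unfolding poly_funs_def by (intro CollectI exI[of _ "\<lambda>\<alpha>. a * c \<alpha>"])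
qed

lemma pf_diff: "p \<in> poly_funs n k \<Longrightarrow> q \<in> poly_funs n k \<Longrightarrow> (\<lambda>x. p x - q x) \<in> poly_funs n k"
  using pf_add[of p n k "\<lambda>x. (-1) * q x"] pf_scale[of q n k "-1"] by simp

lemma pf_const: "(\<lambda>x. a) \<in> poly_funs n k"
  using pf_lincomb[of "{()}" "\<lambda>_ _. 0" n k "\<lambda>_. a"] by simp

lemma pf_local: "p \<in> poly_funs n k \<Longrightarrow> (\<And>i. i < n \<Longrightarrow> x i = y i) \<Longrightarrow> p x = p y"
  unfolding poly_funs_def by auto

lemma pf_translate:
  assumes p: "p \<in> poly_funs n k"
    and int: "\<And>\<gamma>. sum \<gamma> {..<n} \<le> k \<Longrightarrow> integrable M (\<lambda>\<eta>. \<Prod>i<n. g \<eta> i ^ \<gamma> i)"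
  shows "(\<lambda>u. \<integral>\<eta>. p (\<lambda>i. u i + g \<eta> i) \<partial>M) \<in> poly_funs n k"
proof -
  obtain c where c: "p = (\<lambda>x. \<Sum>\<alpha>\<in>exps n k. c \<alpha> * (\<Prod>i<n. x i ^ \<alpha> i))" using p unfolding poly_funs_def by blast
  define H where "H = (\<lambda>\<alpha>::nat\<Rightarrow>nat. PiE {..<n} (\<lambda>i. {..\<alpha> i}))"
  define T where "T = Sigma (exps n k) H"
  have finH: "finite (H \<alpha>)" for \<alpha> unfolding H_def by (intro finite_PiE) auto
  have finT: "finite T" unfolding T_def using exps_finite finH by auto
  have hle: "snd t i \<le> fst t i" if t: "t \<in> T" and i: "i < n" for t i
  proof -
    have "snd t \<in> H (fst t)" using t unfolding T_def by (cases t) auto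
    then have "snd t i \<in> {..fst t i}" using i unfolding H_def by (auto simp: PiE_iff)
    then show ?thesis by simp
  qed
  have sumle: "sum (fst t) {..<n} \<le> k" if t: "t \<in> T" for t
  proof -
    have "fst t \<in> exps n k" using t unfolding T_def by (cases t) auto
    then show ?thesis unfolding exps_def by simp
  qed
  have sum_snd: "sum (snd t) {..<n} \<le> k" if t: "t \<in> T" for t
  proof -
    have "sum (snd t) {..<n} \<le> sum (fst t) {..<n}" using hle[OF t] by (intro sum_mono) simp
    then show ?thesis using sumle[OF t] by linarith
  qed
  have sum_diff: "sum (\<lambda>i. fst t i - snd t i) {..<n} \<le> k" if t: "t \<in> T" for t
  proof -
    have "sum (\<lambda>i. fst t i - snd t i) {..<n} \<le> sum (fst t) {..<n}" by (intro sum_mono) simp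
    then show ?thesis using sumle[OF t] by linarith
  qed
  define A where "A = (\<lambda>t::(nat\<Rightarrow>nat)\<times>(nat\<Rightarrow>nat). c (fst t) * (\<Prod>i<n. real (fst t i choose snd t i)))"
  have expand: "p (\<lambda>i. u i + v i) = (\<Sum>t\<in>T. A t * (\<Prod>i<n. u i ^ snd t i) * (\<Prod>i<n. v i ^ (fst t i - snd t i)))" for u v
  proof -
    have "p (\<lambda>i. u i + v i) = (\<Sum>\<alpha>\<in>exps n k. c \<alpha> * (\<Prod>i<n. (u i + v i) ^ \<alpha> i))" unfolding c ..
    also have "\<dots> = (\<Sum>\<alpha>\<in>exps n k. \<Sum>h\<in>H \<alpha>. A (\<alpha>, h) * (\<Prod>i<n. u i ^ h i) * (\<Prod>i<n. v i ^ (\<alpha> i - h i)))"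
    proof (intro sum.cong refl)
      fix \<alpha> assume "\<alpha> \<in> exps n k"
      have "(\<Prod>i<n. (u i + v i) ^ \<alpha> i) = (\<Prod>i<n. \<Sum>b\<le>\<alpha> i. real (\<alpha> i choose b) * u i ^ b * v i ^ (\<alpha> i - b))"
        by (simp add: binomial_ring)
      also have "\<dots> = (\<Sum>h\<in>H \<alpha>. \<Prod>i<n. real (\<alpha> i choose h i) * u i ^ h i * v i ^ (\<alpha> i - h i))"
        unfolding H_def by (rule prod_sum_PiE) auto
      also have "\<dots> = (\<Sum>h\<in>H \<alpha>. (\<Prod>i<n. real (\<alpha> i choose h i)) * (\<Prod>i<n. u i ^ h i) * (\<Prod>i<n. v i ^ (\<alpha> i - h i)))"
        by (simp add: prod.distrib)
      finally show "c \<alpha> * (\<Prod>i<n. (u i + v i) ^ \<alpha> i) = (\<Sum>h\<in>H \<alpha>. A (\<alpha>, h) * (\<Prod>i<n. u i ^ h i) * (\<Prod>i<n. v i ^ (\<alpha> i - h i)))"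
        unfolding A_def by (simp add: sum_distrib_left mult.assoc)
    qed
    also have "\<dots> = (\<Sum>t\<in>T. A t * (\<Prod>i<n. u i ^ snd t i) * (\<Prod>i<n. v i ^ (fst t i - snd t i)))"
      unfolding T_def using exps_finite finH by (subst sum.Sigma) (auto simp: split_beta)
    finally show ?thesis .
  qed
  have eq: "(\<lambda>u. \<integral>\<eta>. p (\<lambda>i. u i + g \<eta> i) \<partial>M) =
        (\<lambda>u. \<Sum>t\<in>T. (A t * (\<integral>\<eta>. (\<Prod>i<n. g \<eta> i ^ (fst t i - snd t i)) \<partial>M)) * (\<Prod>i<n. u i ^ snd t i))"
  proof
    fix u
    have "(\<integral>\<eta>. p (\<lambda>i. u i + g \<eta> i) \<partial>M) = (\<integral>\<eta>. (\<Sum>t\<in>T. A t * (\<Prod>i<n. u i ^ snd t i) * (\<Prod>i<n. g \<eta> i ^ (fst t i - snd t i))) \<partial>M)"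
      unfolding expand ..
    also have "\<dots> = (\<Sum>t\<in>T. \<integral>\<eta>. A t * (\<Prod>i<n. u i ^ snd t i) * (\<Prod>i<n. g \<eta> i ^ (fst t i - snd t i)) \<partial>M)"
      using int sum_diff by (intro Bochner_Integration.integral_sum) auto
    also have "\<dots> = (\<Sum>t\<in>T. (A t * (\<integral>\<eta>. (\<Prod>i<n. g \<eta> i ^ (fst t i - snd t i)) \<partial>M)) * (\<Prod>i<n. u i ^ snd t i))"
    proof (intro sum.cong refl)
      fix t
      have "(\<integral>\<eta>. A t * (\<Prod>i<n. u i ^ snd t i) * (\<Prod>i<n. g \<eta> i ^ (fst t i - snd t i)) \<partial>M)
          = A t * (\<Prod>i<n. u i ^ snd t i) * (\<integral>\<eta>. (\<Prod>i<n. g \<eta> i ^ (fst t i - snd t i)) \<partial>M)"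
        by (rule integral_mult_right_zero)
      then show "(\<integral>\<eta>. A t * (\<Prod>i<n. u i ^ snd t i) * (\<Prod>i<n. g \<eta> i ^ (fst t i - snd t i)) \<partial>M)
          = (A t * (\<integral>\<eta>. (\<Prod>i<n. g \<eta> i ^ (fst t i - snd t i)) \<partial>M)) * (\<Prod>i<n. u i ^ snd t i)"
        by (simp add: algebra_simps)
    qed
    finally show "(\<integral>\<eta>. p (\<lambda>i. u i + g \<eta> i) \<partial>M) = (\<Sum>t\<in>T. (A t * (\<integral>\<eta>. (\<Prod>i<n. g \<eta> i ^ (fst t i - snd t i)) \<partial>M)) * (\<Prod>i<n. u i ^ snd t i))" .
  qed
  show ?thesis
    apply (subst eq)
    by (rule pf_lincomb[OF finT sum_snd])
qed


definition Vn :: "nat \<Rightarrow> (nat \<Rightarrow> real) \<Rightarrow> real" where "Vn n x = (\<Prod>i<n. 1 + \<bar>x i\<bar>)"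
definition res :: "nat \<Rightarrow> (nat \<Rightarrow> real) \<Rightarrow> nat \<Rightarrow> real" where "res n x = (\<lambda>i. x i - sample_mean n x)"
definition Dk :: "nat \<Rightarrow> nat \<Rightarrow> ((nat \<Rightarrow> real) \<Rightarrow> real) set" where
  "Dk n k = {h. h \<in> borel_measurable (PiM {..<n} (\<lambda>_. borel)) \<and> (\<exists>c. \<forall>x. \<bar>h x\<bar> \<le> c * Vn n x ^ k)}"

lemma Vn_ge1: "Vn n x \<ge> 1" unfolding Vn_def by (intro prod_ge_1) auto

lemma abs_le_Vn: "i < n \<Longrightarrow> 1 + \<bar>x i\<bar> \<le> Vn n x"
  unfolding Vn_def using prod_mono2[of "{..<n}" "{i}" "\<lambda>i. 1 + \<bar>x i\<bar>"] by auto

lemma mean_le_Vn: "n \<ge> 1 \<Longrightarrow> \<bar>sample_mean n x\<bar> \<le> Vn n x"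
proof -
  assume n: "n \<ge> 1"
  have "\<bar>\<Sum>i<n. x i\<bar> \<le> (\<Sum>i<n. \<bar>x i\<bar>)" by (rule sum_abs)
  also have "\<dots> \<le> (\<Sum>i<n. Vn n x)" using abs_le_Vn[of _ n x] by (intro sum_mono) force
  also have "\<dots> = real n * Vn n x" by simp
  finally show ?thesis using n unfolding sample_mean_def by (simp add: divide_le_eq abs_div mult.commute)
qed

lemma res_le_Vn: "n \<ge> 1 \<Longrightarrow> i < n \<Longrightarrow> \<bar>res n x i\<bar> \<le> 2 * Vn n x"
  using abs_le_Vn[of i n x] mean_le_Vn[of n x] unfolding res_def by linarith

lemma mono_res_le:
  assumes n: "n \<ge> 1" and a: "sum \<alpha> {..<n} \<le> k"
  shows "\<bar>\<Prod>i<n. res n x i ^ \<alpha> i\<bar> \<le> 2 ^ k * Vn n x ^ k"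
proof -
  have "\<bar>\<Prod>i<n. res n x i ^ \<alpha> i\<bar> = (\<Prod>i<n. \<bar>res n x i\<bar> ^ \<alpha> i)" by (simp add: abs_prod power_abs)
  also have "\<dots> \<le> (\<Prod>i<n. (2 * Vn n x) ^ \<alpha> i)"
  proof (rule prod_mono)
    fix i assume "i \<in> {..<n}"
    then show "0 \<le> \<bar>res n x i\<bar> ^ \<alpha> i \<and> \<bar>res n x i\<bar> ^ \<alpha> i \<le> (2 * Vn n x) ^ \<alpha> i"
      using power_mono[OF res_le_Vn[OF n, of i x], of "\<alpha> i"] by simp
  qed
  also have "\<dots> = (2 * Vn n x) ^ sum \<alpha> {..<n}" by (simp add: power_sum)
  also have "\<dots> \<le> (2 * Vn n x) ^ k" using a Vn_ge1[of n x] by (intro power_increasing) auto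
  finally show ?thesis by (simp add: power_mult_distrib)
qed

lemma meas_coord[measurable]: "i < n \<Longrightarrow> (\<lambda>x. x i) \<in> borel_measurable (PiM {..<n} (\<lambda>_. borel))"
  by (rule measurable_component_singleton) simp

lemma meas_mean[measurable]: "sample_mean n \<in> borel_measurable (PiM {..<n} (\<lambda>_. borel))"
  unfolding sample_mean_def by measurable

lemma meas_res[measurable]: "i < n \<Longrightarrow> (\<lambda>x. res n x i) \<in> borel_measurable (PiM {..<n} (\<lambda>_. borel))"
  unfolding res_def by measurable

lemma meas_mono_res: "(\<lambda>x. \<Prod>i<n. res n x i ^ \<alpha> i) \<in> borel_measurable (PiM {..<n} (\<lambda>_. borel))"
  by (intro borel_measurable_prod borel_measurable_power meas_res) auto

lemma Dk_I: "h \<in> borel_measurable (PiM {..<n} (\<lambda>_. borel)) \<Longrightarrow> (\<And>x. \<bar>h x\<bar> \<le> c * Vn n x ^ k) \<Longrightarrow> h \<in> Dk n k"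
  unfolding Dk_def by auto

lemma Dk_mono_res: "n \<ge> 1 \<Longrightarrow> sum \<alpha> {..<n} \<le> k \<Longrightarrow> (\<lambda>x. \<Prod>i<n. res n x i ^ \<alpha> i) \<in> Dk n k"
  by (intro Dk_I[where c = "2 ^ k"] meas_mono_res mono_res_le)

lemma Dk_mean: "n \<ge> 1 \<Longrightarrow> k \<ge> 1 \<Longrightarrow> sample_mean n \<in> Dk n k"
proof (intro Dk_I[where c = 1] meas_mean)
  fix x assume "n \<ge> 1" "k \<ge> 1"
  then have "\<bar>sample_mean n x\<bar> \<le> Vn n x" using mean_le_Vn by blast
  also have "\<dots> \<le> Vn n x ^ k" using Vn_ge1[of n x] \<open>k \<ge> 1\<close> by (simp add: self_le_power)
  finally show "\<bar>sample_mean n x\<bar> \<le> 1 * Vn n x ^ k" by simp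
qed

lemma Dk_lincomb:
  assumes "finite I" "\<And>i. i \<in> I \<Longrightarrow> \<phi> i \<in> Dk n k"
  shows "(\<lambda>x. \<Sum>i\<in>I. a i * \<phi> i x) \<in> Dk n k"
  using assms
proof (induction I rule: finite_induct)
  case empty then show ?case by (intro Dk_I[where c = 0]) auto
next
  case (insert j I)
  obtain c1 where c1: "\<And>x. \<bar>(\<Sum>i\<in>I. a i * \<phi> i x)\<bar> \<le> c1 * Vn n x ^ k"
    and m1: "(\<lambda>x. \<Sum>i\<in>I. a i * \<phi> i x) \<in> borel_measurable (PiM {..<n} (\<lambda>_. borel))"
    using insert unfolding Dk_def by auto
  have "\<phi> j \<in> Dk n k" using insert by auto
  then obtain c2 where c2: "\<And>x. \<bar>\<phi> j x\<bar> \<le> c2 * Vn n x ^ k" and m2: "\<phi> j \<in> borel_measurable (PiM {..<n} (\<lambda>_. borel))"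
    unfolding Dk_def by auto
  show ?case
  proof (rule Dk_I[where c = "\<bar>a j\<bar> * c2 + c1"])
    show "(\<lambda>x. \<Sum>i\<in>insert j I. a i * \<phi> i x) \<in> borel_measurable (PiM {..<n} (\<lambda>_. borel))"
      using insert m1 m2 by simp
    fix x
    have "\<bar>a j * \<phi> j x\<bar> \<le> \<bar>a j\<bar> * (c2 * Vn n x ^ k)" using c2[of x] by (simp add: abs_mult mult_left_mono)
    then show "\<bar>\<Sum>i\<in>insert j I. a i * \<phi> i x\<bar> \<le> (\<bar>a j\<bar> * c2 + c1) * Vn n x ^ k"
      using insert c1[of x] by (simp add: algebra_simps)
  qed
qed

lemma Dk_diff: "f \<in> Dk n k \<Longrightarrow> g \<in> Dk n k \<Longrightarrow> (\<lambda>x. f x - g x) \<in> Dk n k"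
  using Dk_lincomb[of "{0::nat, 1}" "\<lambda>i. if i = 0 then f else g" n k "\<lambda>i. if i = 0 then 1 else -1"] by simp

lemma Dk_add: "f \<in> Dk n k \<Longrightarrow> g \<in> Dk n k \<Longrightarrow> (\<lambda>x. f x + g x) \<in> Dk n k"
  using Dk_lincomb[of "{0::nat, 1}" "\<lambda>i. if i = 0 then f else g" n k "\<lambda>i. 1"] by simp

lemma Dk_scale: "f \<in> Dk n k \<Longrightarrow> (\<lambda>x. a * f x) \<in> Dk n k"
  using Dk_lincomb[of "{0::nat}" "\<lambda>i. f" n k "\<lambda>i. a"] by simp

lemma pf_res_Dk: "n \<ge> 1 \<Longrightarrow> p \<in> poly_funs n k \<Longrightarrow> (\<lambda>x. p (res n x)) \<in> Dk n k"
proof -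
  assume n: "n \<ge> 1" and p: "p \<in> poly_funs n k"
  obtain c where c: "p = (\<lambda>x. \<Sum>\<alpha>\<in>exps n k. c \<alpha> * (\<Prod>i<n. x i ^ \<alpha> i))" using p unfolding poly_funs_def by blast
  have "(\<lambda>x. \<Sum>\<alpha>\<in>exps n k. c \<alpha> * (\<Prod>i<n. res n x i ^ \<alpha> i)) \<in> Dk n k"
    using exps_finite n by (intro Dk_lincomb Dk_mono_res) (auto simp: exps_def)
  then show ?thesis unfolding c .
qed

lemma resid_polys_res: "resid_polys n k = {(\<lambda>x. p (res n x)) | p. p \<in> poly_funs n k}"
  unfolding resid_polys_def res_def ..


lemma sum_abs_prod: "finite s \<Longrightarrow> 1 + \<bar>\<Sum>j\<in>s. a j\<bar> \<le> (\<Prod>j\<in>s. 1 + \<bar>a j :: real\<bar>)"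
proof (induction s rule: finite_induct)
  case empty then show ?case by simp
next
  case (insert x s)
  have "1 + \<bar>\<Sum>j\<in>insert x s. a j\<bar> \<le> 1 + \<bar>a x\<bar> + \<bar>\<Sum>j\<in>s. a j\<bar>" using insert by simp
  also have "\<dots> \<le> (1 + \<bar>a x\<bar>) * (1 + \<bar>\<Sum>j\<in>s. a j\<bar>)" by (simp add: algebra_simps)
  also have "\<dots> \<le> (1 + \<bar>a x\<bar>) * (\<Prod>j\<in>s. 1 + \<bar>a j\<bar>)" using insert by (intro mult_left_mono) auto
  finally show ?case using insert by simp
qed

context pit
begin

lemma Vn_Xs: "finite B \<Longrightarrow> Vn n (Xs B \<omega>) \<le> (\<Prod>p\<in>Kb B. 1 + \<bar>\<omega> p\<bar>)"
proof -
  assume B: "finite B"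
  have "Vn n (Xs B \<omega>) = (\<Prod>i<n. 1 + \<bar>\<Sum>j\<in>B. \<omega> (j, i)\<bar>)" unfolding Vn_def Xs_def by (intro prod.cong) auto
  also have "\<dots> \<le> (\<Prod>i<n. \<Prod>j\<in>B. 1 + \<bar>\<omega> (j, i)\<bar>)"
    using B by (intro prod_mono conjI sum_abs_prod) auto
  also have "\<dots> = (\<Prod>j\<in>B. \<Prod>i<n. 1 + \<bar>\<omega> (j, i)\<bar>)" by (rule prod.swap)
  also have "\<dots> = (\<Prod>p\<in>Kb B. 1 + \<bar>\<omega> p\<bar>)" unfolding Kb_def using B by (subst prod.Sigma) (auto simp: split_beta)
  finally show ?thesis .
qed

lemma Kb_le_W: "B \<subseteq> J \<Longrightarrow> (\<Prod>p\<in>Kb B. 1 + \<bar>\<omega> p\<bar>) \<le> W \<omega>"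
  unfolding W_def using Kb_sub by (intro prod_mono2 finK) auto

lemma Xs_meas_gen:
  assumes "finite B" "\<And>j i. j \<in> B \<Longrightarrow> i < n \<Longrightarrow> (j, i) \<in> I"
  shows "Xs B \<in> measurable (PiM I Fp) (PiM {..<n} (\<lambda>_. borel))"
  unfolding Xs_def using assms by (intro measurable_restrict sum_meas) auto

lemma Dk_C:
  assumes h: "h \<in> Dk n k" and s: "s \<subseteq> J"
  shows "(\<lambda>\<omega>. h (Xs s \<omega>)) \<in> C"
proof -
  obtain c where c: "\<And>x. \<bar>h x\<bar> \<le> c * Vn n x ^ k" and m: "h \<in> borel_measurable (PiM {..<n} (\<lambda>_. borel))"
    using h unfolding Dk_def by auto
  have fin: "finite s" using s finJ by (auto dest: finite_subset)
  show ?thesis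
  proof (rule C_I[where c = "max c 0"])
    show "(\<lambda>\<omega>. h (Xs s \<omega>)) \<in> borel_measurable \<Omega>"
      using measurable_comp[OF Xs_meas[OF s] m] by (simp add: comp_def)
    fix \<omega>
    have "Vn n (Xs s \<omega>) \<le> W \<omega>" using Vn_Xs[OF fin, of \<omega>] Kb_le_W[OF s, of \<omega>] by linarith
    then have "Vn n (Xs s \<omega>) ^ k \<le> W \<omega> ^ k" using Vn_ge1 by (intro power_mono) (auto intro: order_trans[OF zero_le_one])
    have "\<bar>h (Xs s \<omega>)\<bar> \<le> c * Vn n (Xs s \<omega>) ^ k" by (rule c)
    also have "\<dots> \<le> max c 0 * Vn n (Xs s \<omega>) ^ k"
    proof -
      have "0 \<le> Vn n (Xs s \<omega>)" using Vn_ge1[of n "Xs s \<omega>"] by linarith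
      then show ?thesis by (intro mult_right_mono) auto
    qed
    also have "\<dots> \<le> max c 0 * W \<omega> ^ k" using \<open>Vn n (Xs s \<omega>) ^ k \<le> W \<omega> ^ k\<close> by (intro mult_left_mono) auto
    finally show "\<bar>h (Xs s \<omega>)\<bar> \<le> max c 0 * W \<omega> ^ k" .
  qed
qed

definition ipX :: "nat set \<Rightarrow> ((nat \<Rightarrow> real) \<Rightarrow> real) \<Rightarrow> ((nat \<Rightarrow> real) \<Rightarrow> real) \<Rightarrow> real" where
  "ipX s f g = ip (\<lambda>\<omega>. f (Xs s \<omega>)) (\<lambda>\<omega>. g (Xs s \<omega>))"

lemma sip_X: assumes s: "s \<subseteq> J" shows "sip (Dk n k) (ipX s)"
proof
  fix f g h assume f: "f \<in> Dk n k" and g: "g \<in> Dk n k" and h: "h \<in> Dk n k"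
  note C = Dk_C[OF f s] Dk_C[OF g s] Dk_C[OF h s]
  show "ipX s (\<lambda>x. f x + g x) h = ipX s f h + ipX s g h"
    unfolding ipX_def using ip_add[OF C] by simp
  show "ipX s (\<lambda>x. f x - g x) h = ipX s f h - ipX s g h"
    unfolding ipX_def using ip_diff[OF C] by simp
next
  fix f g assume f: "f \<in> Dk n k" and g: "g \<in> Dk n k"
  show "(\<lambda>x. f x - g x) \<in> Dk n k" using f g by (rule Dk_diff)
  show "(\<lambda>x. f x + g x) \<in> Dk n k" using f g by (rule Dk_add)
  show "ipX s f g = ipX s g f" unfolding ipX_def using ip_sym[OF Dk_C[OF f s] Dk_C[OF g s]] .
next
  fix f c assume "f \<in> Dk n k" then show "(\<lambda>x. c * f x) \<in> Dk n k" by (rule Dk_scale)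
next
  show "(\<lambda>x. 0) \<in> Dk n k" by (intro Dk_I[where c = 0]) auto
next
  fix f h c assume f: "f \<in> Dk n k" and h: "h \<in> Dk n k"
  show "ipX s (\<lambda>x. c * f x) h = c * ipX s f h" unfolding ipX_def using ip_scale[OF Dk_C[OF f s] Dk_C[OF h s]] by simp
next
  fix f assume f: "f \<in> Dk n k" show "0 \<le> ipX s f f" unfolding ipX_def using ip_pos[OF Dk_C[OF f s]] .
qed

lemma int_sample_law:
  fixes h :: "(nat \<Rightarrow> real) \<Rightarrow> real"
  assumes s: "s \<subseteq> J" and h: "h \<in> borel_measurable (PiM {..<n} (\<lambda>_. borel))"
  shows "(\<integral>x. h x \<partial>sample_law n (conv_set F s)) = (\<integral>\<omega>. h (Xs s \<omega>) \<partial>\<Omega>)"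
proof -
  have m: "Xs s \<in> measurable \<Omega> (PiM {..<n} (\<lambda>_. borel))" using Xs_meas[OF s] .
  have "integral\<^sup>L (distr \<Omega> (PiM {..<n} (\<lambda>_. borel)) (Xs s)) h = (\<integral>\<omega>. h (Xs s \<omega>) \<partial>\<Omega>)"
    apply (rule integral_distr)
    using m h by auto
  then show ?thesis unfolding distr_Xs[OF s] .
qed

lemma ipX_int:
  assumes s: "s \<subseteq> J" and f: "f \<in> Dk n k" and g: "g \<in> Dk n k"
  shows "ipX s f g = (\<integral>x. f x * g x \<partial>sample_law n (conv_set F s))"
proof -
  have "(\<lambda>x. f x * g x) \<in> borel_measurable (PiM {..<n} (\<lambda>_. borel))" using f g unfolding Dk_def by auto
  then show ?thesis unfolding ipX_def ip_def by (simp add: int_sample_law[OF s])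
qed

definition phi :: "(nat \<Rightarrow> nat) \<Rightarrow> (nat \<Rightarrow> real) \<Rightarrow> real" where
  "phi \<alpha> x = (\<Prod>i<n. res n x i ^ \<alpha> i)"

lemma phi_Dk: "\<alpha> \<in> exps n k \<Longrightarrow> phi \<alpha> \<in> Dk n k"
  unfolding phi_def using n1 by (intro Dk_mono_res) (auto simp: exps_def)

lemma resid_Dk: "p \<in> resid_polys n k \<Longrightarrow> p \<in> Dk n k"
  unfolding resid_polys_res using pf_res_Dk n1 by auto

lemma resid_phi: "p \<in> resid_polys n k \<Longrightarrow> \<exists>d. p = (\<lambda>x. \<Sum>\<alpha>\<in>exps n k. d \<alpha> * phi \<alpha> x)"
  unfolding resid_polys_res poly_funs_def phi_def by auto

lemma phi_resid: "(\<lambda>x. \<Sum>\<alpha>\<in>exps n k. d \<alpha> * phi \<alpha> x) \<in> resid_polys n k"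
proof -
  have pf: "(\<lambda>y. \<Sum>\<alpha>\<in>exps n k. d \<alpha> * (\<Prod>i<n. y i ^ \<alpha> i)) \<in> poly_funs n k"
    unfolding poly_funs_def by (intro CollectI exI[of _ d]) (rule refl)
  show ?thesis unfolding resid_polys_res phi_def
    by (rule CollectI, rule exI[of _ "\<lambda>y. \<Sum>\<alpha>\<in>exps n k. d \<alpha> * (\<Prod>i<n. y i ^ \<alpha> i)"]) (simp add: pf)
qed

lemma proj_exists:
  assumes s: "s \<subseteq> J"
  shows "\<exists>q. q \<in> resid_polys n k \<and> (\<forall>p \<in> resid_polys n k.
         integral\<^sup>L (sample_law n (conv_set F s)) (\<lambda>x. (sample_mean n x - q x) * p x) = 0)"
proof -
  interpret X: sip "Dk n k" "ipX s" by (rule sip_X[OF s])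
  have mean: "sample_mean n \<in> Dk n k" using n1 k1 by (rule Dk_mean)
  obtain c where c: "\<forall>\<alpha>\<in>exps n k. ipX s (\<lambda>x. sample_mean n x - (\<Sum>\<beta>\<in>exps n k. c \<beta> * phi \<beta> x)) (phi \<alpha>) = 0"
    using X.gram_schmidt[of "exps n k" phi, OF exps_finite phi_Dk mean] by blast
  define q where "q = (\<lambda>x. \<Sum>\<beta>\<in>exps n k. c \<beta> * phi \<beta> x)"
  have qR: "q \<in> resid_polys n k" unfolding q_def by (rule phi_resid)
  have gq: "(\<lambda>x. sample_mean n x - q x) \<in> Dk n k" using mean resid_Dk[OF qR] by (rule Dk_diff)
  have "integral\<^sup>L (sample_law n (conv_set F s)) (\<lambda>x. (sample_mean n x - q x) * p x) = 0" if p: "p \<in> resid_polys n k" for p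
  proof -
    obtain d where d: "p = (\<lambda>x. \<Sum>\<alpha>\<in>exps n k. d \<alpha> * phi \<alpha> x)" using resid_phi[OF p] by blast
    have "ipX s (\<lambda>x. sample_mean n x - q x) p = (\<Sum>\<alpha>\<in>exps n k. d \<alpha> * ipX s (\<lambda>x. sample_mean n x - q x) (phi \<alpha>))"
      unfolding d using exps_finite phi_Dk gq by (rule X.ip_sum2)
    also have "\<dots> = 0" using c unfolding q_def by simp
    finally show ?thesis using ipX_int[OF s gq resid_Dk[OF p]] by simp
  qed
  then show ?thesis using qR by blast
qed

lemma proj_mean_props:
  assumes s: "s \<subseteq> J"
  shows "proj_mean k n (conv_set F s) \<in> resid_polys n k"
    "\<And>p. p \<in> resid_polys n k \<Longrightarrow> integral\<^sup>L (sample_law n (conv_set F s))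
        (\<lambda>x. (sample_mean n x - proj_mean k n (conv_set F s) x) * p x) = 0"
  using someI_ex[OF proj_exists[OF s]] unfolding proj_mean_def by blast+

lemma const_resid: "(\<lambda>x. 1) \<in> resid_polys n k"
  unfolding resid_polys_res using pf_const[of 1 n k] by (intro CollectI exI[of _ "\<lambda>_. 1"]) simp

lemma est_Dk: "s \<subseteq> J \<Longrightarrow> pitman_est k n (conv_set F s) \<in> Dk n k"
  unfolding pitman_est_def using Dk_mean[OF n1 k1] resid_Dk[OF proj_mean_props(1)] by (intro Dk_diff) auto

lemma est_mean0: "s \<subseteq> J \<Longrightarrow> (\<integral>x. pitman_est k n (conv_set F s) x \<partial>sample_law n (conv_set F s)) = 0"
  using proj_mean_props(2)[OF _ const_resid] unfolding pitman_est_def by simp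

lemma pitman_var_ip: "s \<subseteq> J \<Longrightarrow> pitman_var k n (conv_set F s) = ipX s (pitman_est k n (conv_set F s)) (pitman_est k n (conv_set F s))"
  unfolding pitman_var_def using est_mean0 ipX_int est_Dk by (simp add: power2_eq_square)

lemma pitman_var_le:
  assumes s: "s \<subseteq> J" and p0: "p0 \<in> poly_funs n k"
  shows "pitman_var k n (conv_set F s) \<le> ipX s (\<lambda>x. sample_mean n x - p0 (res n x)) (\<lambda>x. sample_mean n x - p0 (res n x))"
proof -
  interpret X: sip "Dk n k" "ipX s" by (rule sip_X[OF s])
  let ?Q = "proj_mean k n (conv_set F s)"
  have QR: "?Q \<in> resid_polys n k" by (rule proj_mean_props(1)[OF s])
  obtain q1 where q1: "q1 \<in> poly_funs n k" "?Q = (\<lambda>x. q1 (res n x))" using QR unfolding resid_polys_res by auto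
  have pR: "(\<lambda>x. p0 (res n x)) \<in> resid_polys n k" using p0 unfolding resid_polys_res by blast
  have dR: "(\<lambda>x. ?Q x - p0 (res n x)) \<in> resid_polys n k"
    unfolding resid_polys_res q1(2) using pf_diff[OF q1(1) p0] by (intro CollectI exI[of _ "\<lambda>y. q1 y - p0 y"]) simp
  have mean: "sample_mean n \<in> Dk n k" using n1 k1 by (rule Dk_mean)
  have gq: "(\<lambda>x. sample_mean n x - ?Q x) \<in> Dk n k" using mean resid_Dk[OF QR] by (rule Dk_diff)
  have orth: "ipX s (\<lambda>x. sample_mean n x - ?Q x) (\<lambda>x. ?Q x - p0 (res n x)) = 0"
    using ipX_int[OF s gq resid_Dk[OF dR]] proj_mean_props(2)[OF s dR] by simp
  have "ipX s (\<lambda>x. sample_mean n x - ?Q x) (\<lambda>x. sample_mean n x - ?Q x)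
      \<le> ipX s (\<lambda>x. sample_mean n x - p0 (res n x)) (\<lambda>x. sample_mean n x - p0 (res n x))"
    by (rule X.pythagoras[OF mean resid_Dk[OF QR] resid_Dk[OF pR] orth])
  moreover have "pitman_var k n (conv_set F s) = ipX s (\<lambda>x. sample_mean n x - ?Q x) (\<lambda>x. sample_mean n x - ?Q x)"
    using pitman_var_ip[OF s] unfolding pitman_est_def .
  ultimately show ?thesis by simp
qed

end


context pit
begin

definition T :: "(nat \<times> nat \<Rightarrow> real) \<Rightarrow> real" where
  "T \<omega> = pitman_est k n (conv_set F J) (Xs J \<omega>)"

lemma JJ: "J \<subseteq> J" by simp

lemma T_C: "T \<in> C"
  unfolding T_def[abs_def] using Dk_C[OF est_Dk[OF JJ] JJ] .

lemma T_ip: "ip T T = pitman_var k n (conv_set F J)"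
  unfolding pitman_var_ip[OF JJ] ipX_def T_def[abs_def] ..

lemma T_mean: "(\<integral>\<omega>. T \<omega> \<partial>\<Omega>) = 0"
proof -
  have "pitman_est k n (conv_set F J) \<in> borel_measurable (PiM {..<n} (\<lambda>_. borel))"
    using est_Dk[OF JJ] unfolding Dk_def by auto
  then show ?thesis unfolding T_def using int_sample_law[OF JJ] est_mean0[OF JJ] by simp
qed

lemma PJ_T: "ip (P J T) T = 0"
proof -
  have "P J T = (\<lambda>\<omega>. 0)" using P_full[OF T_C] T_mean by (simp add: fun_eq_iff)
  then show ?thesis unfolding ip_def by simp
qed

lemma Dk_int_B:
  assumes h: "h \<in> Dk n k" and B: "B \<subseteq> J"
  shows "integrable (PiM (Kb B) Fp) (\<lambda>\<eta>. h (Xs B \<eta>))"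
proof -
  obtain c where c: "\<And>x. \<bar>h x\<bar> \<le> c * Vn n x ^ k" and m: "h \<in> borel_measurable (PiM {..<n} (\<lambda>_. borel))"
    using h unfolding Dk_def by auto
  have fin: "finite B" using B finJ by (auto dest: finite_subset)
  have finKB: "finite (Kb B)" using fin by (rule finKb)
  have mX: "Xs B \<in> measurable (PiM (Kb B) Fp) (PiM {..<n} (\<lambda>_. borel))"
    using fin by (intro Xs_meas_gen) (auto simp: Kb_def)
  show ?thesis
  proof (rule Bochner_Integration.integrable_bound[where f = "\<lambda>\<eta>. max c 0 * (\<Prod>p\<in>Kb B. (1 + \<bar>\<eta> p\<bar>) ^ k)"])
    show "integrable (PiM (Kb B) Fp) (\<lambda>\<eta>. max c 0 * (\<Prod>p\<in>Kb B. (1 + \<bar>\<eta> p\<bar>) ^ k))"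
      using int_prodpow[OF finKB, of k] by simp
    show "(\<lambda>\<eta>. h (Xs B \<eta>)) \<in> borel_measurable (PiM (Kb B) Fp)"
      using measurable_comp[OF mX m] by (simp add: comp_def)
    show "AE \<eta> in PiM (Kb B) Fp. norm (h (Xs B \<eta>)) \<le> norm (max c 0 * (\<Prod>p\<in>Kb B. (1 + \<bar>\<eta> p\<bar>) ^ k))"
    proof (rule AE_I2)
      fix \<eta>
      have V0: "0 \<le> Vn n (Xs B \<eta>)" using Vn_ge1[of n "Xs B \<eta>"] by linarith
      have "Vn n (Xs B \<eta>) ^ k \<le> (\<Prod>p\<in>Kb B. 1 + \<bar>\<eta> p\<bar>) ^ k"
        using Vn_Xs[OF fin, of \<eta>] V0 by (intro power_mono) auto
      also have "\<dots> = (\<Prod>p\<in>Kb B. (1 + \<bar>\<eta> p\<bar>) ^ k)" by (simp add: prod_power_distrib)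
      finally have Vle: "Vn n (Xs B \<eta>) ^ k \<le> (\<Prod>p\<in>Kb B. (1 + \<bar>\<eta> p\<bar>) ^ k)" .
      have "\<bar>h (Xs B \<eta>)\<bar> \<le> c * Vn n (Xs B \<eta>) ^ k" by (rule c)
      also have "\<dots> \<le> max c 0 * Vn n (Xs B \<eta>) ^ k" using V0 by (intro mult_right_mono) auto
      also have "\<dots> \<le> max c 0 * (\<Prod>p\<in>Kb B. (1 + \<bar>\<eta> p\<bar>) ^ k)" using Vle by (intro mult_left_mono) auto
      finally show "norm (h (Xs B \<eta>)) \<le> norm (max c 0 * (\<Prod>p\<in>Kb B. (1 + \<bar>\<eta> p\<bar>) ^ k))"
        by (simp add: prod_nonneg)
    qed
  qed
qed

lemma Xs_merge:
  assumes s: "s \<subseteq> J" and i: "i < n"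
  shows "Xs J (merge (K - Kb (J - s)) (Kb (J - s)) (\<omega>, \<eta>)) i = Xs s \<omega> i + Xs (J - s) \<eta> i"
proof -
  have fin: "finite s" "finite (J - s)" using s finJ by (auto dest: finite_subset)
  have "Xs J (merge (K - Kb (J - s)) (Kb (J - s)) (\<omega>, \<eta>)) i = (\<Sum>j\<in>s \<union> (J - s). merge (K - Kb (J - s)) (Kb (J - s)) (\<omega>, \<eta>) (j, i))"
    unfolding Xs_def using i s by (simp add: Un_absorb1)
  also have "\<dots> = (\<Sum>j\<in>s. merge (K - Kb (J - s)) (Kb (J - s)) (\<omega>, \<eta>) (j, i)) + (\<Sum>j\<in>J - s. merge (K - Kb (J - s)) (Kb (J - s)) (\<omega>, \<eta>) (j, i))"
    using fin by (intro sum.union_disjoint) auto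
  also have "(\<Sum>j\<in>s. merge (K - Kb (J - s)) (Kb (J - s)) (\<omega>, \<eta>) (j, i)) = (\<Sum>j\<in>s. \<omega> (j, i))"
    using s i by (intro sum.cong) (auto simp: merge_def K_def Kb_def)
  also have "(\<Sum>j\<in>J - s. merge (K - Kb (J - s)) (Kb (J - s)) (\<omega>, \<eta>) (j, i)) = (\<Sum>j\<in>J - s. \<eta> (j, i))"
    using s i by (intro sum.cong) (auto simp: merge_def K_def Kb_def)
  finally show ?thesis unfolding Xs_def using i by simp
qed

lemma mean_add: "(\<And>i. i < n \<Longrightarrow> z i = x i + y i) \<Longrightarrow> sample_mean n z = sample_mean n x + sample_mean n y"
  unfolding sample_mean_def by (simp add: sum.distrib add_divide_distrib)

lemma P_T_form:
  assumes s: "s \<subseteq> J"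
  shows "\<exists>p0\<in>poly_funs n k. \<forall>\<omega>. P (J - s) T \<omega> = sample_mean n (Xs s \<omega>) - p0 (res n (Xs s \<omega>))"
proof -
  define B where "B = J - s"
  have B: "B \<subseteq> J" unfolding B_def by auto
  obtain q0 where q0: "q0 \<in> poly_funs n k" "proj_mean k n (conv_set F J) = (\<lambda>x. q0 (res n x))"
    using proj_mean_props(1)[OF JJ] unfolding resid_polys_res by auto
  have Tform: "T \<omega> = sample_mean n (Xs J \<omega>) - q0 (res n (Xs J \<omega>))" for \<omega>
    unfolding T_def pitman_est_def q0(2) ..
  define g where "g = (\<lambda>\<eta> i. res n (Xs B \<eta>) i)"
  have mean: "sample_mean n \<in> Dk n k" using n1 k1 by (rule Dk_mean)
  have intm: "integrable (PiM (Kb B) Fp) (\<lambda>\<eta>. sample_mean n (Xs B \<eta>))" using Dk_int_B[OF mean B] .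
  have intg: "integrable (PiM (Kb B) Fp) (\<lambda>\<eta>. \<Prod>i<n. g \<eta> i ^ \<gamma> i)" if "sum \<gamma> {..<n} \<le> k" for \<gamma>
    unfolding g_def using Dk_int_B[OF Dk_mono_res[OF n1 that] B] .
  define p0 where "p0 = (\<lambda>u. (\<integral>\<eta>. q0 (\<lambda>i. u i + g \<eta> i) \<partial>PiM (Kb B) Fp) - (\<integral>\<eta>. sample_mean n (Xs B \<eta>) \<partial>PiM (Kb B) Fp))"
  have p0: "p0 \<in> poly_funs n k" unfolding p0_def by (intro pf_diff pf_translate[OF q0(1) intg] pf_const)
  have "P (J - s) T \<omega> = sample_mean n (Xs s \<omega>) - p0 (res n (Xs s \<omega>))" for \<omega>
  proof -
    let ?u = "res n (Xs s \<omega>)"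
    have eqT: "T (merge (K - Kb B) (Kb B) (\<omega>, \<eta>)) = sample_mean n (Xs s \<omega>) + sample_mean n (Xs B \<eta>) - q0 (\<lambda>i. ?u i + g \<eta> i)" for \<eta>
    proof -
      have X: "\<And>i. i < n \<Longrightarrow> Xs J (merge (K - Kb B) (Kb B) (\<omega>, \<eta>)) i = Xs s \<omega> i + Xs B \<eta> i"
        unfolding B_def using Xs_merge[OF s] .
      have M: "sample_mean n (Xs J (merge (K - Kb B) (Kb B) (\<omega>, \<eta>))) = sample_mean n (Xs s \<omega>) + sample_mean n (Xs B \<eta>)"
        by (rule mean_add[OF X])
      have R: "q0 (res n (Xs J (merge (K - Kb B) (Kb B) (\<omega>, \<eta>)))) = q0 (\<lambda>i. ?u i + g \<eta> i)"
        by (rule pf_local[OF q0(1)]) (simp add: res_def g_def X M)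
      show ?thesis unfolding Tform M R ..
    qed
    interpret S: prob_space "PiM (Kb B) Fp" by (rule prob_PiM_Fp)
    have intT: "integrable (PiM (Kb B) Fp) (\<lambda>\<eta>. T (merge (K - Kb B) (Kb B) (\<omega>, \<eta>)))" using P_int[OF T_C B] .
    have intq: "integrable (PiM (Kb B) Fp) (\<lambda>\<eta>. q0 (\<lambda>i. ?u i + g \<eta> i))"
    proof -
      have "integrable (PiM (Kb B) Fp) (\<lambda>\<eta>. sample_mean n (Xs s \<omega>) + sample_mean n (Xs B \<eta>) - T (merge (K - Kb B) (Kb B) (\<omega>, \<eta>)))"
        using intm intT by (intro Bochner_Integration.integrable_diff Bochner_Integration.integrable_add S.integrable_const)
      then show ?thesis unfolding eqT by simp
    qed
    have "P (J - s) T \<omega> = (\<integral>\<eta>. sample_mean n (Xs s \<omega>) + sample_mean n (Xs B \<eta>) - q0 (\<lambda>i. ?u i + g \<eta> i) \<partial>PiM (Kb B) Fp)"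
      unfolding P_def B_def[symmetric] eqT ..
    also have "\<dots> = sample_mean n (Xs s \<omega>) + (\<integral>\<eta>. sample_mean n (Xs B \<eta>) \<partial>PiM (Kb B) Fp) - (\<integral>\<eta>. q0 (\<lambda>i. ?u i + g \<eta> i) \<partial>PiM (Kb B) Fp)"
      using intm intq by (simp add: S.prob_space)
    also have "\<dots> = sample_mean n (Xs s \<omega>) - p0 ?u" unfolding p0_def by simp
    finally show ?thesis .
  qed
  then show ?thesis using p0 by blast
qed

lemma var_s_le:
  assumes s: "s \<subseteq> J"
  shows "pitman_var k n (conv_set F s) \<le> ip (P (J - s) T) (P (J - s) T)"
proof -
  obtain p0 where p0: "p0 \<in> poly_funs n k" "\<And>\<omega>. P (J - s) T \<omega> = sample_mean n (Xs s \<omega>) - p0 (res n (Xs s \<omega>))"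
    using P_T_form[OF s] by blast
  have eq: "P (J - s) T = (\<lambda>\<omega>. sample_mean n (Xs s \<omega>) - p0 (res n (Xs s \<omega>)))" using p0(2) by (simp add: fun_eq_iff)
  show ?thesis using pitman_var_le[OF s p0(1)] unfolding eq ipX_def .
qed

theorem main:
  assumes m1: "1 \<le> m" and mN: "m \<le> N"
  shows "(\<Sum>s \<in> {s. s \<subseteq> {1..N} \<and> card s = m}. pitman_var k n (conv_set F s))
       \<le> real ((N - 1) choose (m - 1)) * pitman_var k n (conv_set F {1..N})"
proof -
  have cJ: "card J = N" unfolding J_def by simp
  have "(\<Sum>s \<in> {s. s \<subseteq> J \<and> card s = m}. pitman_var k n (conv_set F s))
      \<le> (\<Sum>s \<in> {s. s \<subseteq> J \<and> card s = m}. ip (P (J - s) T) (P (J - s) T))"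
    by (intro sum_mono var_s_le) auto
  also have "\<dots> \<le> real ((card J - 1) choose (m - 1)) * ip T T"
    using finJ T_C N1 m1 PJ_T cJ by (intro variance_drop) auto
  finally show ?thesis unfolding T_ip cJ unfolding J_def .
qed

end


theorem theorem1:
  fixes k N n m :: nat and F :: "nat \<Rightarrow> real measure"
  assumes "k \<ge> 1" and "n \<ge> 1" and "1 \<le> m" and "m \<le> N"
    and "\<And>j. j \<in> {1..N} \<Longrightarrow> prob_space (F j)"
    and "\<And>j. j \<in> {1..N} \<Longrightarrow> sets (F j) = sets borel"
    and "\<And>j. j \<in> {1..N} \<Longrightarrow> integrable (F j) (\<lambda>x. x ^ (2 * k))"
  shows "pitman_var k n (conv_set F {1..N}) \<ge>
    (\<Sum>s \<in> {s. s \<subseteq> {1..N} \<and> card s = m}. pitman_var k n (conv_set F s))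
      / real ((N - 1) choose (m - 1))"
proof -
  have N1: "N \<ge> 1" using assms(3,4) by linarith
  interpret pit F N n k
    by (rule pit.intro) (use assms N1 in auto)
  have pos: "real ((N - 1) choose (m - 1)) > 0"
    using assms(3,4) by (simp add: zero_less_binomial)
  have le: "(\<Sum>s \<in> {s. s \<subseteq> {1..N} \<and> card s = m}. pitman_var k n (conv_set F s))
       \<le> real ((N - 1) choose (m - 1)) * pitman_var k n (conv_set F {1..N})"
    by (rule main[OF assms(3) assms(4)])
  show ?thesis
    using le by (subst pos_divide_le_eq[OF pos]) (simp add: mult.commute)
qed

end
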